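(* There is a homotopy monoid \[ (W,\omega):(\Delta,+,0)\to(\mathbf{Top}_*^{\mathrm{op}},\vee,1) \] with $W(1)=S^1$.
   Context: $\mathbf{Top}_*$ is the category of based (compactly generated Hausdorff) spaces and basepoint-preserving maps; $\vee$ is the wedge sum and $1$ the one-point space. $(\mathbf{Top}_*^{\mathrm{op}},\vee,1)$ is the opposite category with monoidal structure given by $\vee$ and $1$ (which are product and terminal object there), and its equivalences are the (based) homotopy equivalences. $\Delta$: objects $n=\{0,\dots,n-1\}$ ($n\ge0$), order-preserving maps, monoidal under ordinal sum $+$ with unit $0$. A homotopy monoid in a monoidal category with equivalences $(\mathcal{M},\otimes,I)$ is a colax monoidal functor $(W,\omega):(\Delta,+,0)\to\mathcal{M}$ — a functor $W$ with maps $\omega_{m,n}:W(m+n)\to W(m)\otimes W(n)$ natural in $m,n$ and $\omega_0:W(0)\to I$, satisfying the coassociativity and counit axioms of a monoidal functor but not required to be invertible — such that $\omega_0$ and every $\omega_{m,n}$ are equivalences. *)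

theory Defs
  imports "HOL-Analysis.Analysis" "HOL-Library.FuncSet"
begin

text \<open>A based space is a topology X together with a basepoint in its carrier.
  Objects of Top_* are required to be compactly generated Hausdorff spaces.\<close>

definition cgh_based :: "'a topology \<Rightarrow> 'a \<Rightarrow> bool" where
  "cgh_based X x0 \<longleftrightarrow> x0 \<in> topspace X \<and> k_space X \<and> Hausdorff_space X"

definition based_map :: "'a topology \<Rightarrow> 'a \<Rightarrow> 'b topology \<Rightarrow> 'b \<Rightarrow> ('a \<Rightarrow> 'b) \<Rightarrow> bool" where
  "based_map X x0 Y y0 f \<longleftrightarrow> continuous_map X Y f \<and> f x0 = y0"

definition based_homotopic ::
  "'a topology \<Rightarrow> 'a \<Rightarrow> 'b topology \<Rightarrow> 'b \<Rightarrow> ('a \<Rightarrow> 'b) \<Rightarrow> ('a \<Rightarrow> 'b) \<Rightarrow> bool" where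
  "based_homotopic X x0 Y y0 f g \<longleftrightarrow> homotopic_with (\<lambda>h. h x0 = y0) X Y f g"

text \<open>Based homotopy equivalence (the equivalences of Top_*, hence also of its opposite).\<close>
definition based_homotopy_equivalence ::
  "'a topology \<Rightarrow> 'a \<Rightarrow> 'b topology \<Rightarrow> 'b \<Rightarrow> ('a \<Rightarrow> 'b) \<Rightarrow> bool" where
  "based_homotopy_equivalence X x0 Y y0 f \<longleftrightarrow>
     based_map X x0 Y y0 f \<and>
     (\<exists>g. based_map Y y0 X x0 g \<and>
          based_homotopic X x0 X x0 (g \<circ> f) id \<and>
          based_homotopic Y y0 Y y0 (f \<circ> g) id)"

text \<open>The wedge X \<or> Y of based spaces (X,a), (Y,b) is realised on the type 'a + 'b:
  its points are Inl x (x in X) and Inr y (y in Y, y \<noteq> b); the basepoint is Inl a,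
  which is the identification of a and b. The topology is the quotient topology of
  the disjoint union under the identification map wedge_norm.\<close>

definition wedge_norm :: "'a \<Rightarrow> 'b \<Rightarrow> 'a + 'b \<Rightarrow> 'a + 'b" where
  "wedge_norm a b z = (case z of Inl x \<Rightarrow> Inl x | Inr y \<Rightarrow> (if y = b then Inl a else Inr y))"

definition wedge_carrier :: "'a topology \<Rightarrow> 'a \<Rightarrow> 'b topology \<Rightarrow> 'b \<Rightarrow> ('a + 'b) set" where
  "wedge_carrier X a Y b = Inl ` topspace X \<union> Inr ` (topspace Y - {b})"

definition wedge :: "'a topology \<Rightarrow> 'a \<Rightarrow> 'b topology \<Rightarrow> 'b \<Rightarrow> ('a + 'b) topology" where
  "wedge X a Y b = topology (\<lambda>U. U \<subseteq> wedge_carrier X a Y b \<and>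
       openin X {x \<in> topspace X. Inl x \<in> U} \<and>
       openin Y {y \<in> topspace Y. wedge_norm a b (Inr y) \<in> U})"

definition wedge_map :: "'c \<Rightarrow> 'd \<Rightarrow> ('a \<Rightarrow> 'c) \<Rightarrow> ('b \<Rightarrow> 'd) \<Rightarrow> 'a + 'b \<Rightarrow> 'c + 'd" where
  "wedge_map a' b' f g z = wedge_norm a' b' (map_sum f g z)"

definition wedge_assoc :: "('a + 'b) + 'c \<Rightarrow> 'a + ('b + 'c)" where
  "wedge_assoc z = (case z of Inl (Inl x) \<Rightarrow> Inl x | Inl (Inr y) \<Rightarrow> Inr (Inl y) | Inr w \<Rightarrow> Inr (Inr w))"

definition one_point :: "unit topology" where
  "one_point = discrete_topology {()}"

text \<open>A morphism m \<rightarrow> n of Delta (n = {0,...,n-1}) is an order-preserving map,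
  represented as an extensional function on {..<m}.\<close>
definition Delta_hom :: "nat \<Rightarrow> nat \<Rightarrow> (nat \<Rightarrow> nat) set" where
  "Delta_hom m n = {f \<in> {..<m} \<rightarrow>\<^sub>E {..<n}. mono_on {..<m} f}"

definition Delta_id :: "nat \<Rightarrow> nat \<Rightarrow> nat" where
  "Delta_id n = restrict id {..<n}"

definition Delta_comp :: "nat \<Rightarrow> (nat \<Rightarrow> nat) \<Rightarrow> (nat \<Rightarrow> nat) \<Rightarrow> nat \<Rightarrow> nat" where
  "Delta_comp l g f = compose {..<l} g f"

definition Delta_sum :: "nat \<Rightarrow> nat \<Rightarrow> nat \<Rightarrow> (nat \<Rightarrow> nat) \<Rightarrow> (nat \<Rightarrow> nat) \<Rightarrow> nat \<Rightarrow> nat" where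
  "Delta_sum m m' n f g = restrict (\<lambda>i. if i < m then f i else n + g (i - m)) {..<m + m'}"

text \<open>A functor W : Delta \<rightarrow> Top_*^op, i.e. a contravariant functor Delta \<rightarrow> Top_*:
  objects (W n, bp n); on a morphism f : m \<rightarrow> n, Wm m n f : W n \<rightarrow> W m.
  Colax structure maps in Top_*^op, \<omega>_{m,n} : W(m+n) \<rightarrow> W m \<or> W n, are based maps
  om m n : W m \<or> W n \<rightarrow> W (m+n) in Top_*; \<omega>_0 : W 0 \<rightarrow> 1 in Top_*^op is the
  (unique) based map 1 \<rightarrow> W 0, i.e. the inclusion of the basepoint.
  Equality of morphisms of Top_* is equality of functions on the carrier.\<close>

definition homotopy_monoid_Topop ::
  "(nat \<Rightarrow> 'a topology) \<Rightarrow> (nat \<Rightarrow> 'a) \<Rightarrow> (nat \<Rightarrow> nat \<Rightarrow> (nat \<Rightarrow> nat) \<Rightarrow> 'a \<Rightarrow> 'a)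
    \<Rightarrow> (nat \<Rightarrow> nat \<Rightarrow> 'a + 'a \<Rightarrow> 'a) \<Rightarrow> bool" where
  "homotopy_monoid_Topop W bp Wm om \<longleftrightarrow>
    \<comment> \<open>objects\<close>
    (\<forall>n. cgh_based (W n) (bp n)) \<and>
    \<comment> \<open>functor on morphisms\<close>
    (\<forall>m n f. f \<in> Delta_hom m n \<longrightarrow> based_map (W n) (bp n) (W m) (bp m) (Wm m n f)) \<and>
    (\<forall>n. \<forall>x \<in> topspace (W n). Wm n n (Delta_id n) x = x) \<and>
    (\<forall>l m n f g. f \<in> Delta_hom l m \<longrightarrow> g \<in> Delta_hom m n \<longrightarrow>
       (\<forall>x \<in> topspace (W n). Wm l n (Delta_comp l g f) x = Wm l m f (Wm m n g x))) \<and>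
    \<comment> \<open>structure maps \<omega>_{m,n}\<close>
    (\<forall>m n. based_map (wedge (W m) (bp m) (W n) (bp n)) (Inl (bp m)) (W (m + n)) (bp (m + n)) (om m n)) \<and>
    \<comment> \<open>naturality in m and n\<close>
    (\<forall>m m' n n' f g. f \<in> Delta_hom m m' \<longrightarrow> g \<in> Delta_hom n n' \<longrightarrow>
       (\<forall>z \<in> topspace (wedge (W m') (bp m') (W n') (bp n')).
          Wm (m + n) (m' + n') (Delta_sum m n m' f g) (om m' n' z) =
          om m n (wedge_map (bp m) (bp n) (Wm m m' f) (Wm n n' g) z))) \<and>
    \<comment> \<open>coassociativity\<close>
    (\<forall>l m n. \<forall>z \<in> topspace (wedge (wedge (W l) (bp l) (W m) (bp m)) (Inl (bp l)) (W n) (bp n)).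
       om (l + m) n (wedge_map (bp (l + m)) (bp n) (om l m) id z) =
       om l (m + n) (wedge_map (bp l) (bp (m + n)) id (om m n) (wedge_assoc z))) \<and>
    \<comment> \<open>counit laws (left and right)\<close>
    (\<forall>n. \<forall>x \<in> topspace (W n). om 0 n (wedge_norm (bp 0) (bp n) (Inr x)) = x) \<and>
    (\<forall>n. \<forall>x \<in> topspace (W n). om n 0 (Inl x) = x) \<and>
    \<comment> \<open>homotopy monoid: all structure maps are equivalences\<close>
    based_homotopy_equivalence one_point () (W 0) (bp 0) (\<lambda>_. bp 0) \<and>
    (\<forall>m n. based_homotopy_equivalence (wedge (W m) (bp m) (W n) (bp n)) (Inl (bp m))
              (W (m + n)) (bp (m + n)) (om m n))"

end

theory Submission
  imports Defs
begin


definition wedgeP :: "'a topology \<Rightarrow> 'a \<Rightarrow> 'b topology \<Rightarrow> 'b \<Rightarrow> ('a + 'b) set \<Rightarrow> bool" where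
  "wedgeP X a Y b U \<longleftrightarrow> U \<subseteq> wedge_carrier X a Y b \<and>
       openin X {x \<in> topspace X. Inl x \<in> U} \<and>
       openin Y {y \<in> topspace Y. wedge_norm a b (Inr y) \<in> U}"

lemma istopology_wedgeP: "istopology (wedgeP X a Y b)"
  unfolding istopology_def
proof (intro conjI allI impI)
  fix S T assume S: "wedgeP X a Y b S" and T: "wedgeP X a Y b T"
  have e1: "{x \<in> topspace X. Inl x \<in> S \<inter> T} = {x \<in> topspace X. Inl x \<in> S} \<inter> {x \<in> topspace X. Inl x \<in> T}" by auto
  have e2: "{y \<in> topspace Y. wedge_norm a b (Inr y) \<in> S \<inter> T} = {y \<in> topspace Y. wedge_norm a b (Inr y) \<in> S} \<inter> {y \<in> topspace Y. wedge_norm a b (Inr y) \<in> T}" by auto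
  show "wedgeP X a Y b (S \<inter> T)" using S T unfolding wedgeP_def e1 e2 by auto
next
  fix K assume K: "\<forall>S\<in>K. wedgeP X a Y b S"
  have e1: "{x \<in> topspace X. Inl x \<in> \<Union>K} = \<Union>((\<lambda>S. {x \<in> topspace X. Inl x \<in> S}) ` K)" by auto
  have e2: "{y \<in> topspace Y. wedge_norm a b (Inr y) \<in> \<Union>K} = \<Union>((\<lambda>S. {y \<in> topspace Y. wedge_norm a b (Inr y) \<in> S}) ` K)" by auto
  show "wedgeP X a Y b (\<Union>K)" using K unfolding wedgeP_def e1 e2
    by (auto intro!: openin_Union)
qed

lemma openin_wedge: "openin (wedge X a Y b) U \<longleftrightarrow> wedgeP X a Y b U"
  unfolding wedge_def wedgeP_def[symmetric]
  using istopology_wedgeP topology_inverse' by metis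

lemma topspace_wedge:
  assumes "a \<in> topspace X"
  shows "topspace (wedge X a Y b) = wedge_carrier X a Y b"
proof
  show "topspace (wedge X a Y b) \<subseteq> wedge_carrier X a Y b"
    unfolding topspace_def openin_wedge wedgeP_def by auto
  have "wedgeP X a Y b (wedge_carrier X a Y b)"
  proof -
    have e1: "{x \<in> topspace X. Inl x \<in> wedge_carrier X a Y b} = topspace X"
      by (auto simp: wedge_carrier_def)
    have e2: "{y \<in> topspace Y. wedge_norm a b (Inr y) \<in> wedge_carrier X a Y b} = topspace Y"
      using assms by (auto simp: wedge_carrier_def wedge_norm_def)
    show ?thesis unfolding wedgeP_def e1 e2 by auto
  qed
  then show "wedge_carrier X a Y b \<subseteq> topspace (wedge X a Y b)"
    unfolding topspace_def openin_wedge by auto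
qed

lemma wedge_norm_Inl[simp]: "wedge_norm a b (Inl x) = Inl x"
  by (simp add: wedge_norm_def)

lemma wedge_norm_Inr: "wedge_norm a b (Inr y) = (if y = b then Inl a else Inr y)"
  by (simp add: wedge_norm_def)

lemma continuous_map_from_wedge:
  assumes a: "a \<in> topspace X"
    and f: "continuous_map X Z (\<lambda>x. h (Inl x))"
    and g: "continuous_map Y Z (\<lambda>y. h (wedge_norm a b (Inr y)))"
  shows "continuous_map (wedge X a Y b) Z h"
  unfolding continuous_map_def
proof (intro conjI allI impI)
  show "h \<in> topspace (wedge X a Y b) \<rightarrow> topspace Z"
  proof
    fix z assume "z \<in> topspace (wedge X a Y b)"
    then have "z \<in> Inl ` topspace X \<or> z \<in> Inr ` (topspace Y - {b})"
      unfolding topspace_wedge[OF a, of Y b] wedge_carrier_def by blast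
    then show "h z \<in> topspace Z"
    proof
      assume "z \<in> Inl ` topspace X"
      then obtain x where "x \<in> topspace X" "z = Inl x" by blast
      then show ?thesis using f by (simp add: continuous_map_def Pi_iff)
    next
      assume "z \<in> Inr ` (topspace Y - {b})"
      then obtain y where y: "y \<in> topspace Y" "y \<noteq> b" "z = Inr y" by blast
      then have "h (wedge_norm a b (Inr y)) \<in> topspace Z"
        using g by (simp add: continuous_map_def Pi_iff)
      then show ?thesis using y by (simp add: wedge_norm_Inr)
    qed
  qed
  fix U assume U: "openin Z U"
  show "openin (wedge X a Y b) {z \<in> topspace (wedge X a Y b). h z \<in> U}"
    unfolding openin_wedge wedgeP_def
  proof (intro conjI)
    show "{z \<in> topspace (wedge X a Y b). h z \<in> U} \<subseteq> wedge_carrier X a Y b"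
      using topspace_wedge[OF a, of Y b] by auto
    have e1: "{x \<in> topspace X. Inl x \<in> {z \<in> topspace (wedge X a Y b). h z \<in> U}} = {x \<in> topspace X. h (Inl x) \<in> U}"
      unfolding topspace_wedge[OF a, of Y b] wedge_carrier_def by auto
    show "openin X {x \<in> topspace X. Inl x \<in> {z \<in> topspace (wedge X a Y b). h z \<in> U}}"
      unfolding e1 using f U by (rule openin_continuous_map_preimage)
    have e2: "{y \<in> topspace Y. wedge_norm a b (Inr y) \<in> {z \<in> topspace (wedge X a Y b). h z \<in> U}} = {y \<in> topspace Y. h (wedge_norm a b (Inr y)) \<in> U}"
      unfolding topspace_wedge[OF a, of Y b] wedge_carrier_def using a by (auto simp: wedge_norm_Inr)
    show "openin Y {y \<in> topspace Y. wedge_norm a b (Inr y) \<in> {z \<in> topspace (wedge X a Y b). h z \<in> U}}"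
      unfolding e2 using g U by (rule openin_continuous_map_preimage)
  qed
qed

lemma continuous_map_wedge_Inl:
  assumes a: "a \<in> topspace X"
  shows "continuous_map X (wedge X a Y b) Inl"
  unfolding continuous_map_def
proof (intro conjI allI impI)
  show "Inl \<in> topspace X \<rightarrow> topspace (wedge X a Y b)"
    unfolding topspace_wedge[OF a, of Y b] wedge_carrier_def by auto
  fix U assume "openin (wedge X a Y b) U"
  then show "openin X {x \<in> topspace X. Inl x \<in> U}"
    unfolding openin_wedge wedgeP_def by auto
qed

lemma continuous_map_wedge_Inr:
  assumes a: "a \<in> topspace X"
  shows "continuous_map Y (wedge X a Y b) (\<lambda>y. wedge_norm a b (Inr y))"
  unfolding continuous_map_def
proof (intro conjI allI impI)
  show "(\<lambda>y. wedge_norm a b (Inr y)) \<in> topspace Y \<rightarrow> topspace (wedge X a Y b)"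
    unfolding topspace_wedge[OF a, of Y b] wedge_carrier_def using a by (auto simp: wedge_norm_Inr)
  fix U assume "openin (wedge X a Y b) U"
  then show "openin Y {y \<in> topspace Y. wedge_norm a b (Inr y) \<in> U}"
    unfolding openin_wedge wedgeP_def by auto
qed



section \<open>Encoding tuples into complex numbers\<close>

definition pairc :: "complex \<times> complex \<Rightarrow> complex" where
  "pairc = (SOME f. inj f)"

lemma inj_pairc: "inj pairc"
proof -
  have 1: "ordIso2 (card_of (UNIV \<times> UNIV :: (complex \<times> complex) set)) (card_of (UNIV :: complex set))"
    by (rule card_of_Times_same_infinite) (rule infinite_UNIV_char_0)
  have 2: "ordLeq3 (card_of (UNIV \<times> UNIV :: (complex \<times> complex) set)) (card_of (UNIV :: complex set))"
    using ordIso_iff_ordLeq[THEN iffD1, OF 1] by (rule conjunct1)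
  obtain f :: "complex \<times> complex \<Rightarrow> complex" where "inj_on f (UNIV \<times> UNIV)"
    using card_of_ordLeq[THEN iffD2, OF 2] by blast
  then have "inj f" by simp
  then have "\<exists>f :: complex \<times> complex \<Rightarrow> complex. inj f" by blast
  then show ?thesis unfolding pairc_def by (rule someI_ex)
qed

primrec code :: "nat \<Rightarrow> (nat \<Rightarrow> complex) \<Rightarrow> complex" where
  "code 0 x = 0"
| "code (Suc k) x = pairc (x k, code k x)"

lemma code_inj: "code k x = code k y \<Longrightarrow> \<forall>i<k. x i = y i"
proof (induction k)
  case 0 then show ?case by simp
next
  case (Suc k)
  then have "(x k, code k x) = (y k, code k y)"
    using inj_pairc by (simp add: inj_eq)
  then show ?case using Suc.IH by (auto simp: less_Suc_eq)
qed

definition enc :: "nat \<Rightarrow> (nat \<Rightarrow> complex) \<Rightarrow> complex" where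
  "enc k x = (if k = 1 then x 0 else code k x)"

lemma enc_inj_on: "inj_on (enc k) (extensional {..<k})"
proof (rule inj_onI)
  fix x y assume x: "x \<in> extensional {..<k}" and y: "y \<in> extensional {..<k}" and e: "enc k x = enc k y"
  have "\<forall>i<k. x i = y i"
  proof (cases "k = 1")
    case True then show ?thesis using e by (simp add: enc_def)
  next
    case False then show ?thesis using e code_inj by (simp add: enc_def)
  qed
  then show "x = y" using x y by (auto intro!: extensionalityI[of _ "{..<k}"])
qed

definition dec :: "nat \<Rightarrow> complex \<Rightarrow> nat \<Rightarrow> complex" where
  "dec k z = inv_into (extensional {..<k}) (enc k) z"

lemma dec_enc [simp]: "x \<in> extensional {..<k} \<Longrightarrow> dec k (enc k x) = x"
  unfolding dec_def by (rule inv_into_f_f[OF enc_inj_on])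

lemma dec_enc_restrict [simp]: "dec k (enc k (restrict f {..<k})) = restrict f {..<k}"
  by simp

section \<open>Quotient topology\<close>

definition qP :: "'a topology \<Rightarrow> ('a \<Rightarrow> 'b) \<Rightarrow> 'b set \<Rightarrow> bool" where
  "qP X f U \<longleftrightarrow> U \<subseteq> f ` topspace X \<and> openin X {x \<in> topspace X. f x \<in> U}"

definition qtop :: "'a topology \<Rightarrow> ('a \<Rightarrow> 'b) \<Rightarrow> 'b topology" where
  "qtop X f = topology (qP X f)"

lemma istopology_qtop: "istopology (qP X f)"
  unfolding istopology_def
proof (intro conjI allI impI)
  fix S T assume S: "qP X f S" and T: "qP X f T"
  have e: "{x \<in> topspace X. f x \<in> S \<inter> T} = {x \<in> topspace X. f x \<in> S} \<inter> {x \<in> topspace X. f x \<in> T}" by auto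
  show "qP X f (S \<inter> T)"
    using S T unfolding e qP_def by auto
next
  fix K assume K: "\<forall>S\<in>K. qP X f S"
  have e: "{x \<in> topspace X. f x \<in> \<Union>K} = \<Union>((\<lambda>S. {x \<in> topspace X. f x \<in> S}) ` K)" by auto
  show "qP X f (\<Union>K)"
    using K unfolding e qP_def by (auto intro!: openin_Union)
qed

lemma openin_qtop: "openin (qtop X f) U \<longleftrightarrow> U \<subseteq> f ` topspace X \<and> openin X {x \<in> topspace X. f x \<in> U}"
  unfolding qtop_def qP_def[symmetric] using istopology_qtop topology_inverse' by metis

lemma topspace_qtop [simp]: "topspace (qtop X f) = f ` topspace X"
proof
  show "topspace (qtop X f) \<subseteq> f ` topspace X"
    unfolding topspace_def openin_qtop by auto
  have e: "{x \<in> topspace X. f x \<in> f ` topspace X} = topspace X" by auto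
  have "openin (qtop X f) (f ` topspace X)"
    unfolding openin_qtop e by auto
  then show "f ` topspace X \<subseteq> topspace (qtop X f)"
    by (rule openin_subset)
qed

lemma quotient_map_qtop: "quotient_map X (qtop X f) f"
  unfolding quotient_map_def topspace_qtop
proof (intro conjI allI impI refl)
  fix U assume "U \<subseteq> f ` topspace X"
  then show "openin X {x \<in> topspace X. f x \<in> U} = openin (qtop X f) U"
    unfolding openin_qtop by blast
qed

lemma qtop_unique:
  assumes q: "quotient_map X Y f" shows "qtop X f = Y"
proof (rule topology_eq[THEN iffD2], intro allI)
  fix U
  have ts: "f ` topspace X = topspace Y" using q by (simp add: quotient_map_def)
  have eq: "U \<subseteq> topspace Y \<Longrightarrow> openin X {x \<in> topspace X. f x \<in> U} \<longleftrightarrow> openin Y U"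
    using q unfolding quotient_map_def by blast
  show "openin (qtop X f) U \<longleftrightarrow> openin Y U"
    unfolding openin_qtop ts using eq openin_subset[of Y U] by blast
qed

lemma continuous_map_qtop_desc:
  assumes "continuous_map X Z g" and "\<And>x. x \<in> topspace X \<Longrightarrow> h (f x) = g x"
  shows "continuous_map (qtop X f) Z h"
proof (rule continuous_compose_quotient_map[OF quotient_map_qtop])
  show "continuous_map X Z (h \<circ> f)"
    using assms(1) by (rule continuous_map_eq) (simp add: assms(2))
qed



definition cis2 :: "real \<Rightarrow> complex" where
  "cis2 t = exp (2 * of_real pi * \<i> * of_real t)"

lemma cis2_0 [simp]: "cis2 0 = 1" by (simp add: cis2_def)
lemma cis2_1 [simp]: "cis2 1 = 1"
  by (simp add: cis2_def exp_eq_1)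

lemma norm_cis2 [simp]: "norm (cis2 t) = 1"
  unfolding cis2_def by (simp add: norm_exp_eq_Re)

lemma continuous_on_cis2: "continuous_on UNIV cis2"
  unfolding cis2_def by (intro continuous_intros)

lemma cis2_eq:
  assumes a: "a \<in> {0..1}" and b: "b \<in> {0..1}" and e: "cis2 a = cis2 b"
  shows "a = b \<or> (a \<in> {0,1} \<and> b \<in> {0,1})"
proof -
  obtain n :: int where n: "2 * of_real pi * \<i> * of_real a = 2 * of_real pi * \<i> * of_real b + (of_int (2 * n) * pi) * \<i>"
    using e unfolding cis2_def exp_eq by blast
  then have "Im (2 * of_real pi * \<i> * of_real a) = Im (2 * of_real pi * \<i> * of_real b + (of_int (2 * n) * pi) * \<i>)"
    by simp
  then have "2 * pi * a = 2 * pi * b + 2 * of_int n * pi" by simp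
  then have "2 * pi * a = 2 * pi * (b + of_int n)" by (simp add: algebra_simps)
  then have ab: "a = b + of_int n" using pi_gt_zero by simp
  have "-1 \<le> real_of_int n" "real_of_int n \<le> 1" using a b ab by auto
  then have "n = -1 \<or> n = 0 \<or> n = 1" by linarith
  then show ?thesis using a b ab by auto
qed

definition Ec :: "nat \<Rightarrow> (nat \<Rightarrow> real) \<Rightarrow> nat \<Rightarrow> complex" where
  "Ec k \<theta> = restrict (\<lambda>i. cis2 (\<theta> i)) {..<k}"

definition Ep :: "nat \<Rightarrow> (nat \<Rightarrow> real) \<Rightarrow> complex" where
  "Ep k \<theta> = enc k (Ec k \<theta>)"

definition Dset :: "nat \<Rightarrow> (nat \<Rightarrow> real) set" where
  "Dset k = {\<theta> \<in> {..<k} \<rightarrow>\<^sub>E {0..1}. \<forall>i j. i \<le> j \<longrightarrow> j < k \<longrightarrow> \<theta> i \<le> \<theta> j}"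

definition DT :: "nat \<Rightarrow> (nat \<Rightarrow> real) topology" where
  "DT k = subtopology (product_topology (\<lambda>_. euclideanreal) {..<k}) (Dset k)"

definition Wt :: "nat \<Rightarrow> complex topology" where
  "Wt k = qtop (DT k) (Ep k)"

definition bpt :: "nat \<Rightarrow> complex" where
  "bpt k = Ep k (\<lambda>_. 0)"

lemma Ec_ext [simp]: "Ec k \<theta> \<in> extensional {..<k}"
  by (simp add: Ec_def)

lemma dec_Ep [simp]: "dec k (Ep k \<theta>) = Ec k \<theta>"
  by (simp add: Ep_def)

lemma Ep_eq_iff: "Ep k \<theta> = Ep k \<theta>' \<longleftrightarrow> Ec k \<theta> = Ec k \<theta>'"
  by (metis Ep_def dec_Ep)

lemma topspace_DT [simp]: "topspace (DT k) = Dset k"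
  by (auto simp: DT_def Dset_def)

lemma topspace_Wt [simp]: "topspace (Wt k) = Ep k ` Dset k"
  by (simp add: Wt_def)

lemma Dset_range: "\<theta> \<in> Dset k \<Longrightarrow> i < k \<Longrightarrow> 0 \<le> \<theta> i \<and> \<theta> i \<le> 1"
  by (auto simp: Dset_def PiE_iff)

lemma Dset_mono: "\<theta> \<in> Dset k \<Longrightarrow> i \<le> j \<Longrightarrow> j < k \<Longrightarrow> \<theta> i \<le> \<theta> j"
  by (auto simp: Dset_def)

lemma Dset_ext: "\<theta> \<in> Dset k \<Longrightarrow> \<theta> \<in> extensional {..<k}"
  by (auto simp: Dset_def PiE_iff)

lemma Dset_zero: "(\<lambda>i\<in>{..<k}. 0) \<in> Dset k"
  by (auto simp: Dset_def)

lemma Ec_cong: "(\<And>i. i < k \<Longrightarrow> cis2 (\<theta> i) = cis2 (\<theta>' i)) \<Longrightarrow> Ec k \<theta> = Ec k \<theta>'"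
  unfolding Ec_def by (rule restrict_ext) simp

lemma Ep_cong: "(\<And>i. i < k \<Longrightarrow> \<theta> i = \<theta>' i) \<Longrightarrow> Ep k \<theta> = Ep k \<theta>'"
  unfolding Ep_def by (rule arg_cong[where f="enc k"], rule Ec_cong) simp

lemma Ec_vertex:
  assumes "\<And>i. i < k \<Longrightarrow> \<theta> i \<in> {0,1}"
  shows "Ec k \<theta> = Ec k (\<lambda>_. 0)"
proof (rule Ec_cong)
  fix i assume "i < k"
  then have "\<theta> i = 0 \<or> \<theta> i = 1" using assms by blast
  then show "cis2 (\<theta> i) = cis2 0" by auto
qed

lemma Ep_vertex:
  assumes "\<And>i. i < k \<Longrightarrow> \<theta> i \<in> {0,1}"
  shows "Ep k \<theta> = bpt k"
  unfolding bpt_def Ep_def using Ec_vertex[OF assms] by simp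

lemma bpt_in [simp]: "bpt k \<in> topspace (Wt k)"
proof -
  have "bpt k = Ep k (\<lambda>i\<in>{..<k}. 0)" unfolding bpt_def by (rule Ep_cong) simp
  then show ?thesis using Dset_zero by simp
qed

lemma Ec_fiber:
  assumes t: "\<theta> \<in> Dset k" and t': "\<theta>' \<in> Dset k" and e: "Ec k \<theta> = Ec k \<theta>'"
  shows "\<theta> = \<theta>' \<or> (\<forall>i<k. \<theta> i \<in> {0,1} \<and> \<theta>' i \<in> {0,1})"
proof -
  have c: "\<theta> i = \<theta>' i \<or> (\<theta> i \<in> {0,1} \<and> \<theta>' i \<in> {0,1})" if "i < k" for i
  proof -
    have "Ec k \<theta> i = Ec k \<theta>' i" using e by simp
    then have "cis2 (\<theta> i) = cis2 (\<theta>' i)" using that by (simp add: Ec_def)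
    moreover have "\<theta> i \<in> {0..1}" "\<theta>' i \<in> {0..1}" using Dset_range[OF t that] Dset_range[OF t' that] by auto
    ultimately show ?thesis using cis2_eq by blast
  qed
  show ?thesis
  proof (cases "\<exists>i<k. \<theta> i \<notin> {0,1}")
    case False
    then have A: "\<forall>i<k. \<theta> i \<in> {0,1}" by blast
    have "\<forall>i<k. \<theta>' i \<in> {0,1}"
    proof (intro allI impI)
      fix i assume i: "i < k"
      show "\<theta>' i \<in> {0,1}" using c[OF i] A i by force
    qed
    then show ?thesis using A by blast
  next
    case True
    then obtain i where i: "i < k" "\<theta> i \<notin> {0,1}" by blast
    have n01: "\<theta> i \<noteq> 0" "\<theta> i \<noteq> 1" using i(2) by auto
    have ti: "\<theta>' i = \<theta> i" using c[OF i(1)] n01 by auto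
    have r: "0 < \<theta> i" "\<theta> i < 1" using Dset_range[OF t i(1)] n01 by linarith+
    have "\<theta> j = \<theta>' j" if j: "j < k" for j
    proof (cases "\<theta> j = \<theta>' j")
      case False
      then have v: "\<theta> j = 0 \<or> \<theta> j = 1" "\<theta>' j = 0 \<or> \<theta>' j = 1" using c[OF j] by auto
      show ?thesis
      proof (cases "j \<le> i")
        case True
        then have "\<theta> j \<le> \<theta> i" "\<theta>' j \<le> \<theta>' i" using Dset_mono[OF t True i(1)] Dset_mono[OF t' True i(1)] by auto
        then have "\<theta> j = 0" "\<theta>' j = 0" using v r ti by linarith+
        then show ?thesis by simp
      next
        case False
        then have "\<theta> i \<le> \<theta> j" "\<theta>' i \<le> \<theta>' j" using Dset_mono[OF t _ j, of i] Dset_mono[OF t' _ j, of i] False by auto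
        then have "\<theta> j = 1" "\<theta>' j = 1" using v r ti by linarith+
        then show ?thesis by simp
      qed
    qed simp
    then have "\<theta> = \<theta>'" using Dset_ext[OF t] Dset_ext[OF t'] by (auto intro!: extensionalityI[of _ "{..<k}"])
    then show ?thesis by blast
  qed
qed

lemma Ep_fiber:
  assumes "\<theta> \<in> Dset k" "\<theta>' \<in> Dset k" "Ep k \<theta> = Ep k \<theta>'"
  shows "\<theta> = \<theta>' \<or> (\<forall>i<k. \<theta> i \<in> {0,1} \<and> \<theta>' i \<in> {0,1})"
  using Ec_fiber assms Ep_eq_iff by blast


lemma cont_proj_DT: "i < k \<Longrightarrow> continuous_map (DT k) euclideanreal (\<lambda>\<theta>. \<theta> i)"
  unfolding DT_def
  by (rule continuous_map_from_subtopology) (rule continuous_map_product_projection, simp)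

lemma cont_into_DT:
  assumes "\<And>x. x \<in> topspace X \<Longrightarrow> g x \<in> Dset k"
    and "\<And>i. i < k \<Longrightarrow> continuous_map X euclideanreal (\<lambda>x. g x i)"
  shows "continuous_map X (DT k) g"
  unfolding DT_def continuous_map_in_subtopology
proof
  show "continuous_map X (product_topology (\<lambda>_. euclideanreal) {..<k}) g"
    unfolding continuous_map_componentwise
    using assms Dset_ext by auto
  show "g \<in> topspace X \<rightarrow> Dset k" using assms(1) by auto
qed

lemma compact_DT: "compact_space (DT k)"
proof -
  let ?P = "product_topology (\<lambda>_. euclideanreal) {..<k}"
  have c1: "compactin ?P (PiE {..<k} (\<lambda>_. {0..1}))"
    by (simp add: compactin_PiE)
  have H: "Hausdorff_space ?P" by (simp add: Hausdorff_space_product_topology)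
  have cl1: "closedin ?P (PiE {..<k} (\<lambda>_. {0..1}))"
    using c1 H by (simp add: compactin_imp_closedin)
  define F where "F = (\<lambda>(i,j). {\<theta> \<in> topspace ?P. \<theta> i \<le> \<theta> j}) ` {(i,j). i \<le> j \<and> j < k}"
  have clF: "closedin ?P S" if "S \<in> F" for S
  proof -
    obtain i j where ij: "i \<le> j" "j < k" "S = {\<theta> \<in> topspace ?P. \<theta> i \<le> \<theta> j}"
      using \<open>S \<in> F\<close> unfolding F_def by auto
    have "continuous_map ?P euclideanreal (\<lambda>\<theta>. \<theta> j - \<theta> i)"
      using ij by (intro continuous_intros) auto
    then have "closedin ?P {\<theta> \<in> topspace ?P. \<theta> j - \<theta> i \<in> {0..}}"
      by (rule closedin_continuous_map_preimage) simp
    moreover have "{\<theta> \<in> topspace ?P. \<theta> j - \<theta> i \<in> {0..}} = S" using ij by auto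
    ultimately show ?thesis by simp
  qed
  have cl2: "closedin ?P (\<Inter>(insert (topspace ?P) F))"
    using clF closedin_topspace[of ?P] by (intro closedin_Inter) auto
  define Mon where "Mon = {\<theta>::nat\<Rightarrow>real. \<forall>i j. i \<le> j \<longrightarrow> j < k \<longrightarrow> \<theta> i \<le> \<theta> j}"
  have e1: "Dset k = PiE {..<k} (\<lambda>_. {0..1}) \<inter> Mon" unfolding Dset_def Mon_def by blast
  have e2: "\<Inter>(insert (topspace ?P) F) = topspace ?P \<inter> Mon" unfolding F_def Mon_def by auto
  have e3: "PiE {..<k} (\<lambda>_. {0..1::real}) \<subseteq> topspace ?P" by (auto simp: PiE_iff)
  have eq: "Dset k = PiE {..<k} (\<lambda>_. {0..1}) \<inter> \<Inter>(insert (topspace ?P) F)"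
    unfolding e1 e2 using e3 by blast
  have "closedin ?P (Dset k)" unfolding eq using cl1 cl2 by (rule closedin_Int)
  moreover have "Dset k \<subseteq> PiE {..<k} (\<lambda>_. {0..1})" by (auto simp: Dset_def)
  ultimately have "compactin ?P (Dset k)"
    using closed_compactin[OF c1] by blast
  then show ?thesis unfolding DT_def by (rule compact_space_subtopology)
qed

lemma cont_Ec: "continuous_map (DT k) (product_topology (\<lambda>_. euclidean) {..<k}) (Ec k)"
  unfolding continuous_map_componentwise
proof
  show "Ec k ` topspace (DT k) \<subseteq> extensional {..<k}" by auto
  show "\<forall>i\<in>{..<k}. continuous_map (DT k) euclidean (\<lambda>x. Ec k x i)"
  proof
    fix i assume i: "i \<in> {..<k}"
    have "continuous_map (DT k) euclidean (\<lambda>x. cis2 (x i))"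
      using continuous_map_compose[OF cont_proj_DT[of i k], of euclidean cis2] i continuous_on_cis2
      by (simp add: o_def)
    then show "continuous_map (DT k) euclidean (\<lambda>x. Ec k x i)"
      by (rule continuous_map_eq) (use i in \<open>simp add: Ec_def\<close>)
  qed
qed

lemma quotient_Ep: "quotient_map (DT k) (Wt k) (Ep k)"
  unfolding Wt_def by (rule quotient_map_qtop)

lemma cont_Ep: "continuous_map (DT k) (Wt k) (Ep k)"
  using quotient_Ep by (rule quotient_imp_continuous_map)

lemma cont_dec: "continuous_map (Wt k) (product_topology (\<lambda>_. euclidean) {..<k}) (dec k)"
  unfolding Wt_def by (rule continuous_map_qtop_desc[OF cont_Ec]) simp

lemma compact_Wt: "compact_space (Wt k)"
proof -
  have "compactin (Wt k) (Ep k ` topspace (DT k))"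
    using image_compactin[OF compact_DT[unfolded compact_space_def] cont_Ep] .
  then show ?thesis by (simp add: compact_space_def)
qed

lemma Hausdorff_Wt: "Hausdorff_space (Wt k)"
  unfolding Hausdorff_space_def
proof (intro allI impI)
  fix x y assume xy: "x \<in> topspace (Wt k) \<and> y \<in> topspace (Wt k) \<and> x \<noteq> y"
  let ?P = "product_topology (\<lambda>_. euclidean :: complex topology) {..<k}"
  have H: "Hausdorff_space ?P" by (simp add: Hausdorff_space_product_topology)
  have ne: "dec k x \<noteq> dec k y" using xy by (auto simp: Ep_eq_iff)
  have inP: "dec k x \<in> topspace ?P" "dec k y \<in> topspace ?P"
    using cont_dec xy by (auto simp: continuous_map_def)
  obtain U V where UV: "openin ?P U" "openin ?P V" "dec k x \<in> U" "dec k y \<in> V" "disjnt U V"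
    using H inP ne unfolding Hausdorff_space_def by metis
  show "\<exists>U V. openin (Wt k) U \<and> openin (Wt k) V \<and> x \<in> U \<and> y \<in> V \<and> disjnt U V"
  proof (intro exI conjI)
    show "openin (Wt k) {z \<in> topspace (Wt k). dec k z \<in> U}"
      using cont_dec UV(1) by (rule openin_continuous_map_preimage)
    show "openin (Wt k) {z \<in> topspace (Wt k). dec k z \<in> V}"
      using cont_dec UV(2) by (rule openin_continuous_map_preimage)
    show "x \<in> {z \<in> topspace (Wt k). dec k z \<in> U}" using xy UV by auto
    show "y \<in> {z \<in> topspace (Wt k). dec k z \<in> V}" using xy UV by auto
    show "disjnt {z \<in> topspace (Wt k). dec k z \<in> U} {z \<in> topspace (Wt k). dec k z \<in> V}"
      using UV(5) by (auto simp: disjnt_def)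
  qed
qed

lemma cgh_Wt: "cgh_based (Wt k) (bpt k)"
  unfolding cgh_based_def using compact_Wt Hausdorff_Wt compact_imp_k_space bpt_in by auto

lemma bpt_1: "bpt 1 = 1"
  by (simp add: bpt_def Ep_def enc_def Ec_def)

lemma Ep_1: "Ep 1 \<theta> = cis2 (\<theta> 0)"
  by (simp add: Ep_def enc_def Ec_def)

lemma Ep_Suc0: "Ep (Suc 0) \<theta> = cis2 (\<theta> 0)"
  using Ep_1 by simp

lemma Wt_1: "Wt 1 = top_of_set (sphere 0 1)"
  unfolding Wt_def
proof (rule qtop_unique, rule continuous_imp_quotient_map)
  show "continuous_map (DT 1) (top_of_set (sphere 0 1)) (Ep 1)"
    unfolding continuous_map_in_subtopology
  proof
    have "continuous_map (DT 1) euclidean (\<lambda>x. cis2 (x 0))"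
      using continuous_map_compose[OF cont_proj_DT[of 0 1], of euclidean cis2] continuous_on_cis2
      by (simp add: o_def)
    then show "continuous_map (DT 1) euclidean (Ep 1)"
      by (rule continuous_map_eq) (simp add: Ep_1 Ep_Suc0)
    show "Ep 1 \<in> topspace (DT 1) \<rightarrow> sphere 0 1" by (auto simp: Ep_1 Ep_Suc0)
  qed
  show "compact_space (DT 1)" by (rule compact_DT)
  show "Hausdorff_space (top_of_set (sphere (0::complex) 1))" by (simp add: Hausdorff_space_subtopology)
  show "Ep 1 ` topspace (DT 1) = topspace (top_of_set (sphere (0::complex) 1))"
  proof
    show "Ep 1 ` topspace (DT 1) \<subseteq> topspace (top_of_set (sphere 0 1))" by (auto simp: Ep_1 Ep_Suc0)
    show "topspace (top_of_set (sphere 0 1)) \<subseteq> Ep 1 ` topspace (DT 1)"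
    proof
      fix z :: complex assume "z \<in> topspace (top_of_set (sphere 0 1))"
      then have nz: "norm z = 1" by simp
      define a where "a = Arg2pi z / (2 * pi)"
      have a: "0 \<le> a" "a \<le> 1" using Arg2pi[of z] pi_gt_zero by (auto simp: a_def field_simps)
      have "z = of_real (norm z) * exp (\<i> * of_real (Arg2pi z))"
        using Arg2pi[of z] by (simp add: is_Arg_def)
      also have "\<dots> = cis2 a" using nz pi_gt_zero
        by (simp add: cis2_def a_def field_simps)
      finally have za: "z = cis2 a" .
      define \<theta> where "\<theta> = (\<lambda>i\<in>{..<1::nat}. a)"
      have "\<theta> \<in> Dset 1" using a by (auto simp: Dset_def \<theta>_def)
      moreover have "Ep 1 \<theta> = z" using za by (simp add: Ep_1 Ep_Suc0 \<theta>_def)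
      ultimately show "z \<in> Ep 1 ` topspace (DT 1)" by force
    qed
  qed
qed



definition Wmt :: "nat \<Rightarrow> nat \<Rightarrow> (nat \<Rightarrow> nat) \<Rightarrow> complex \<Rightarrow> complex" where
  "Wmt m n f z = enc m (restrict (\<lambda>i. dec n z (f i)) {..<m})"

definition omt :: "nat \<Rightarrow> nat \<Rightarrow> complex + complex \<Rightarrow> complex" where
  "omt m n z = (case z of
      Inl x \<Rightarrow> enc (m + n) (restrict (\<lambda>i. if i < m then dec m x i else 1) {..<m + n})
    | Inr y \<Rightarrow> enc (m + n) (restrict (\<lambda>i. if i < m then 1 else dec n y (i - m)) {..<m + n}))"

lemma omt_Inl: "omt m n (Inl x) = enc (m + n) (restrict (\<lambda>i. if i < m then dec m x i else 1) {..<m + n})"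
  by (simp add: omt_def)

lemma omt_Inr: "omt m n (Inr y) = enc (m + n) (restrict (\<lambda>i. if i < m then 1 else dec n y (i - m)) {..<m + n})"
  by (simp add: omt_def)

lemma dec_bpt: "dec k (bpt k) = restrict (\<lambda>_. 1) {..<k}"
  by (simp add: bpt_def Ec_def)

lemma enc_dec:
  assumes "z \<in> topspace (Wt k)" shows "enc k (dec k z) = z"
  using assms by (auto simp: Ep_def)

lemma dec_ext:
  assumes "z \<in> topspace (Wt k)" shows "dec k z \<in> extensional {..<k}"
  using assms by auto

lemma restrict_dec:
  assumes "z \<in> topspace (Wt k)" shows "restrict (dec k z) {..<k} = dec k z"
  using dec_ext[OF assms] by (simp add: extensional_restrict)

lemma omt_norm: "omt m n (wedge_norm (bpt m) (bpt n) (Inr w)) = omt m n (Inr w)"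
proof (cases "w = bpt n")
  case True
  have "restrict (\<lambda>i. if i < m then dec m (bpt m) i else 1) {..<m + n}
      = restrict (\<lambda>i. if i < m then 1 else dec n (bpt n) (i - m)) {..<m + n}"
    by (rule restrict_ext) (auto simp: dec_bpt)
  then show ?thesis using True by (simp add: wedge_norm_Inr omt_Inl omt_Inr)
next
  case False then show ?thesis by (simp add: wedge_norm_Inr)
qed

lemma Delta_hom_range: "f \<in> Delta_hom m n \<Longrightarrow> i < m \<Longrightarrow> f i < n"
  by (auto simp: Delta_hom_def PiE_iff)

lemma Wmt_id:
  assumes "z \<in> topspace (Wt n)" shows "Wmt n n (Delta_id n) z = z"
proof -
  have "restrict (\<lambda>i. dec n z (Delta_id n i)) {..<n} = restrict (dec n z) {..<n}"
    by (rule restrict_ext) (simp add: Delta_id_def)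
  then show ?thesis unfolding Wmt_def using restrict_dec[OF assms] enc_dec[OF assms] by simp
qed

lemma Wmt_comp:
  assumes f: "f \<in> Delta_hom l m" and g: "g \<in> Delta_hom m n"
  shows "Wmt l n (Delta_comp l g f) z = Wmt l m f (Wmt m n g z)"
proof -
  have "restrict (\<lambda>i. dec n z (Delta_comp l g f i)) {..<l}
      = restrict (\<lambda>i. restrict (\<lambda>i. dec n z (g i)) {..<m} (f i)) {..<l}"
  proof (rule restrict_ext)
    fix i assume "i \<in> {..<l}"
    then have "f i < m" "i < l" using Delta_hom_range[OF f] by auto
    then show "dec n z (Delta_comp l g f i) = restrict (\<lambda>i. dec n z (g i)) {..<m} (f i)"
      by (simp add: Delta_comp_def compose_def)
  qed
  then show ?thesis unfolding Wmt_def by simp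
qed

lemma Delta_sum_apply:
  "i < m + n \<Longrightarrow> Delta_sum m n m' f g i = (if i < m then f i else m' + g (i - m))"
  by (simp add: Delta_sum_def)

lemma dec_Wmt [simp]: "dec m (Wmt m n f z) = restrict (\<lambda>i. dec n z (f i)) {..<m}"
  by (simp add: Wmt_def)

lemma dec_omt_Inl [simp]: "dec (m + n) (omt m n (Inl x)) = restrict (\<lambda>i. if i < m then dec m x i else 1) {..<m + n}"
  by (simp add: omt_Inl)

lemma dec_omt_Inr [simp]: "dec (m + n) (omt m n (Inr y)) = restrict (\<lambda>i. if i < m then 1 else dec n y (i - m)) {..<m + n}"
  by (simp add: omt_Inr)

lemma omt_natural:
  assumes f: "f \<in> Delta_hom m m'" and g: "g \<in> Delta_hom n n'"
  shows "Wmt (m + n) (m' + n') (Delta_sum m n m' f g) (omt m' n' z) =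
         omt m n (wedge_map (bpt m) (bpt n) (Wmt m m' f) (Wmt n n' g) z)"
proof (cases z)
  case (Inl x)
  have pw: "dec (m' + n') (omt m' n' (Inl x)) (Delta_sum m n m' f g i) = (if i < m then dec m (Wmt m m' f x) i else 1)"
    if i: "i \<in> {..<m + n}" for i
  proof (cases "i < m")
    case True
    then have "f i < m'" using Delta_hom_range[OF f] by auto
    then show ?thesis using True i by (simp add: Delta_sum_apply)
  next
    case False
    then have "g (i - m) < n'" using Delta_hom_range[OF g] i by auto
    then show ?thesis using False i by (simp add: Delta_sum_apply)
  qed
  have "Wmt (m + n) (m' + n') (Delta_sum m n m' f g) (omt m' n' (Inl x))
      = enc (m + n) (restrict (\<lambda>i. dec (m' + n') (omt m' n' (Inl x)) (Delta_sum m n m' f g i)) {..<m + n})"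
    by (simp only: Wmt_def)
  also have "\<dots> = enc (m + n) (restrict (\<lambda>i. if i < m then dec m (Wmt m m' f x) i else 1) {..<m + n})"
    by (rule arg_cong[where f="enc (m + n)"], rule restrict_ext, rule pw)
  also have "\<dots> = omt m n (Inl (Wmt m m' f x))" by (simp only: omt_Inl)
  finally show ?thesis using Inl by (simp add: wedge_map_def)
next
  case (Inr y)
  have pw: "dec (m' + n') (omt m' n' (Inr y)) (Delta_sum m n m' f g i) = (if i < m then 1 else dec n (Wmt n n' g y) (i - m))"
    if i: "i \<in> {..<m + n}" for i
  proof (cases "i < m")
    case True
    then have "f i < m'" using Delta_hom_range[OF f] by auto
    then show ?thesis using True i by (simp add: Delta_sum_apply)
  next
    case False
    then have "g (i - m) < n'" "i - m < n" using Delta_hom_range[OF g] i by auto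
    then show ?thesis using False i by (simp add: Delta_sum_apply)
  qed
  have "Wmt (m + n) (m' + n') (Delta_sum m n m' f g) (omt m' n' (Inr y))
      = enc (m + n) (restrict (\<lambda>i. dec (m' + n') (omt m' n' (Inr y)) (Delta_sum m n m' f g i)) {..<m + n})"
    by (simp only: Wmt_def)
  also have "\<dots> = enc (m + n) (restrict (\<lambda>i. if i < m then 1 else dec n (Wmt n n' g y) (i - m)) {..<m + n})"
    by (rule arg_cong[where f="enc (m + n)"], rule restrict_ext, rule pw)
  also have "\<dots> = omt m n (Inr (Wmt n n' g y))" by (simp only: omt_Inr)
  finally show ?thesis using Inr by (simp add: wedge_map_def omt_norm)
qed



lemma coassoc_LL: "omt (l + m) n (Inl (omt l m (Inl x))) = omt l (m + n) (Inl x)"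
proof -
  have pw: "(if i < l + m then dec (l + m) (omt l m (Inl x)) i else 1) = (if i < l then dec l x i else 1)"
    if "i \<in> {..<l + (m + n)}" for i
    by simp
  show ?thesis
    unfolding omt_Inl[of "l + m" n] omt_Inl[of l "m + n"] add.assoc
    by (rule arg_cong[where f="enc (l + (m + n))"], rule restrict_ext, rule pw)
qed

lemma coassoc_LR: "omt (l + m) n (Inl (omt l m (Inr y))) = omt l (m + n) (Inr (omt m n (Inl y)))"
proof -
  have pw: "(if i < l + m then dec (l + m) (omt l m (Inr y)) i else 1) = (if i < l then 1 else dec (m + n) (omt m n (Inl y)) (i - l))"
    if "i \<in> {..<l + (m + n)}" for i
    using that by auto
  show ?thesis
    unfolding omt_Inl[of "l + m" n] omt_Inr[of l "m + n"] add.assoc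
    by (rule arg_cong[where f="enc (l + (m + n))"], rule restrict_ext, rule pw)
qed

lemma coassoc_R: "omt (l + m) n (Inr w) = omt l (m + n) (Inr (omt m n (Inr w)))"
proof -
  have pw: "(if i < l + m then 1 else dec n w (i - (l + m))) = (if i < l then 1 else dec (m + n) (omt m n (Inr w)) (i - l))"
    if "i \<in> {..<l + (m + n)}" for i
    using that by (auto simp: diff_diff_add)
  show ?thesis
    unfolding omt_Inr[of "l + m" n] omt_Inr[of l "m + n"] add.assoc
    by (rule arg_cong[where f="enc (l + (m + n))"], rule restrict_ext, rule pw)
qed

lemma omt_coassoc:
  "omt (l + m) n (wedge_map (bpt (l + m)) (bpt n) (omt l m) id z) =
   omt l (m + n) (wedge_map (bpt l) (bpt (m + n)) id (omt m n) (wedge_assoc z))"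
proof (cases z)
  case (Inl u)
  show ?thesis
  proof (cases u)
    case (Inl x)
    then show ?thesis using \<open>z = Inl u\<close>
      by (simp add: wedge_map_def wedge_assoc_def coassoc_LL)
  next
    case (Inr y)
    then show ?thesis using \<open>z = Inl u\<close>
      by (simp add: wedge_map_def wedge_assoc_def coassoc_LR omt_norm)
  qed
next
  case (Inr w)
  then show ?thesis
    by (simp add: wedge_map_def wedge_assoc_def coassoc_R omt_norm)
qed

lemma counit_left:
  assumes "x \<in> topspace (Wt n)" shows "omt 0 n (wedge_norm (bpt 0) (bpt n) (Inr x)) = x"
proof -
  have "omt 0 n (Inr x) = enc n (restrict (dec n x) {..<n})"
    by (simp add: omt_Inr)
  then show ?thesis using omt_norm restrict_dec[OF assms] enc_dec[OF assms] by simp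
qed

lemma counit_right:
  assumes "x \<in> topspace (Wt n)" shows "omt n 0 (Inl x) = x"
proof -
  have "omt n 0 (Inl x) = enc n (restrict (dec n x) {..<n})"
    unfolding omt_Inl add_0_right
    by (rule arg_cong[where f="enc n"], rule restrict_ext) simp
  then show ?thesis using restrict_dec[OF assms] enc_dec[OF assms] by simp
qed



lemma dec_Ep_apply: "i < k \<Longrightarrow> dec k (Ep k \<theta>) i = cis2 (\<theta> i)"
  by (simp add: Ec_def)

lemma Wmt_Ep:
  assumes "\<And>i. i < m \<Longrightarrow> f i < n"
  shows "Wmt m n f (Ep n \<theta>) = Ep m (restrict (\<lambda>i. \<theta> (f i)) {..<m})"
  unfolding Wmt_def Ep_def[of m]
  by (rule arg_cong[where f="enc m"]) (auto simp: Ec_def assms intro!: restrict_ext)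

lemma bpt_alt: "bpt k = enc k (restrict (\<lambda>_. 1) {..<k})"
  by (simp add: bpt_def Ep_def Ec_def)

lemma Wmt_bpt:
  assumes "\<And>i. i < m \<Longrightarrow> f i < n"
  shows "Wmt m n f (bpt n) = bpt m"
  unfolding Wmt_def dec_bpt bpt_alt[of m]
  by (rule arg_cong[where f="enc m"]) (auto simp: assms intro!: restrict_ext)

lemma cont_Wmt:
  assumes f: "f \<in> Delta_hom m n"
  shows "continuous_map (Wt n) (Wt m) (Wmt m n f)"
proof -
  let ?g = "\<lambda>\<theta>. restrict (\<lambda>i. \<theta> (f i)) {..<m}"
  have rng: "\<And>i. i < m \<Longrightarrow> f i < n" using Delta_hom_range[OF f] .
  have mono: "f i \<le> f j" if "i \<le> j" "j < m" for i j
    using f that unfolding Delta_hom_def mono_on_def by auto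
  have g: "continuous_map (DT n) (DT m) ?g"
  proof (rule cont_into_DT)
    fix \<theta> assume "\<theta> \<in> topspace (DT n)"
    then have t: "\<theta> \<in> Dset n" by simp
    show "?g \<theta> \<in> Dset m"
      unfolding Dset_def
    proof (intro CollectI conjI allI impI)
      show "?g \<theta> \<in> {..<m} \<rightarrow>\<^sub>E {0..1}"
        using Dset_range[OF t] rng by auto
      fix i j assume "i \<le> j" "j < m"
      then show "?g \<theta> i \<le> ?g \<theta> j"
        using Dset_mono[OF t mono rng] by auto
    qed
  next
    fix i assume i: "i < m"
    show "continuous_map (DT n) euclideanreal (\<lambda>\<theta>. ?g \<theta> i)"
      using cont_proj_DT[OF rng[OF i]] by (rule continuous_map_eq) (simp add: i)
  qed
  show ?thesis
    unfolding Wt_def[of n]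
  proof (rule continuous_map_qtop_desc)
    show "continuous_map (DT n) (Wt m) (Ep m \<circ> ?g)"
      using g cont_Ep by (rule continuous_map_compose)
    fix \<theta> assume "\<theta> \<in> topspace (DT n)"
    show "Wmt m n f (Ep n \<theta>) = (Ep m \<circ> ?g) \<theta>"
      using Wmt_Ep[OF rng] by simp
  qed
qed

lemma based_Wmt:
  assumes f: "f \<in> Delta_hom m n"
  shows "based_map (Wt n) (bpt n) (Wt m) (bpt m) (Wmt m n f)"
proof -
  have "Wmt m n f (bpt n) = bpt m" by (rule Wmt_bpt) (rule Delta_hom_range[OF f])
  then show ?thesis unfolding based_map_def using cont_Wmt[OF f] by blast
qed

definition padL :: "nat \<Rightarrow> nat \<Rightarrow> (nat \<Rightarrow> real) \<Rightarrow> nat \<Rightarrow> real" where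
  "padL m n \<alpha> = restrict (\<lambda>i. if i < m then \<alpha> i else 1) {..<m + n}"

definition padR :: "nat \<Rightarrow> nat \<Rightarrow> (nat \<Rightarrow> real) \<Rightarrow> nat \<Rightarrow> real" where
  "padR m n \<beta> = restrict (\<lambda>i. if i < m then 0 else \<beta> (i - m)) {..<m + n}"

lemma padL_Dset: assumes a: "\<alpha> \<in> Dset m" shows "padL m n \<alpha> \<in> Dset (m + n)"
  unfolding Dset_def
proof (intro CollectI conjI allI impI)
  show "padL m n \<alpha> \<in> {..<m + n} \<rightarrow>\<^sub>E {0..1}"
    using Dset_range[OF a] by (auto simp: padL_def)
  fix i j assume ij: "i \<le> j" "j < m + n"
  show "padL m n \<alpha> i \<le> padL m n \<alpha> j"
  proof (cases "j < m")
    case True then show ?thesis using ij Dset_mono[OF a ij(1)] by (auto simp: padL_def)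
  next
    case False then show ?thesis using ij Dset_range[OF a, of i] by (auto simp: padL_def)
  qed
qed

lemma padR_Dset: assumes b: "\<beta> \<in> Dset n" shows "padR m n \<beta> \<in> Dset (m + n)"
  unfolding Dset_def
proof (intro CollectI conjI allI impI)
  show "padR m n \<beta> \<in> {..<m + n} \<rightarrow>\<^sub>E {0..1}"
    using Dset_range[OF b] by (auto simp: padR_def)
  fix i j assume ij: "i \<le> j" "j < m + n"
  show "padR m n \<beta> i \<le> padR m n \<beta> j"
  proof (cases "i < m")
    case True then show ?thesis using ij Dset_range[OF b, of "j - m"] by (auto simp: padR_def)
  next
    case False
    then have "i - m \<le> j - m" "j - m < n" using ij by auto
    then show ?thesis using ij False Dset_mono[OF b] by (auto simp: padR_def)
  qed
qed

lemma cont_padL: "continuous_map (DT m) (DT (m + n)) (padL m n)"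
proof (rule cont_into_DT)
  fix \<alpha> assume "\<alpha> \<in> topspace (DT m)" then show "padL m n \<alpha> \<in> Dset (m + n)" by (simp add: padL_Dset)
next
  fix i assume i: "i < m + n"
  show "continuous_map (DT m) euclideanreal (\<lambda>\<alpha>. padL m n \<alpha> i)"
  proof (cases "i < m")
    case True
    show ?thesis by (rule continuous_map_eq[OF cont_proj_DT[OF True]]) (simp add: padL_def i True)
  next
    case False
    have "continuous_map (DT m) euclideanreal (\<lambda>\<alpha>. 1)" by simp
    then show ?thesis by (rule continuous_map_eq) (simp add: padL_def i False)
  qed
qed

lemma cont_padR: "continuous_map (DT n) (DT (m + n)) (padR m n)"
proof (rule cont_into_DT)
  fix \<beta> assume "\<beta> \<in> topspace (DT n)" then show "padR m n \<beta> \<in> Dset (m + n)" by (simp add: padR_Dset)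
next
  fix i assume i: "i < m + n"
  show "continuous_map (DT n) euclideanreal (\<lambda>\<beta>. padR m n \<beta> i)"
  proof (cases "i < m")
    case False
    then have im: "i - m < n" using i by auto
    show ?thesis by (rule continuous_map_eq[OF cont_proj_DT[OF im]]) (simp add: padR_def i False)
  next
    case True
    have "continuous_map (DT n) euclideanreal (\<lambda>\<alpha>. 0)" by simp
    then show ?thesis by (rule continuous_map_eq) (simp add: padR_def i True)
  qed
qed

lemma omt_Inl_Ep: "omt m n (Inl (Ep m \<alpha>)) = Ep (m + n) (padL m n \<alpha>)"
  unfolding omt_Inl Ep_def[of "m + n"]
  by (rule arg_cong[where f="enc (m + n)"]) (auto simp: Ec_def padL_def intro!: restrict_ext)

lemma omt_Inr_Ep: "omt m n (Inr (Ep n \<beta>)) = Ep (m + n) (padR m n \<beta>)"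
  unfolding omt_Inr Ep_def[of "m + n"]
  by (rule arg_cong[where f="enc (m + n)"]) (auto simp: Ec_def padR_def intro!: restrict_ext)

lemma omt_bpt: "omt m n (Inl (bpt m)) = bpt (m + n)"
  unfolding omt_Inl dec_bpt bpt_alt[of "m + n"]
  by (rule arg_cong[where f="enc (m + n)"]) (auto intro!: restrict_ext)

lemma cont_omt: "continuous_map (wedge (Wt m) (bpt m) (Wt n) (bpt n)) (Wt (m + n)) (omt m n)"
proof (rule continuous_map_from_wedge[OF bpt_in])
  show "continuous_map (Wt m) (Wt (m + n)) (\<lambda>x. omt m n (Inl x))"
    unfolding Wt_def[of m]
  proof (rule continuous_map_qtop_desc)
    show "continuous_map (DT m) (Wt (m + n)) (Ep (m + n) \<circ> padL m n)"
      using cont_padL cont_Ep by (rule continuous_map_compose)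
  qed (simp add: omt_Inl_Ep)
  show "continuous_map (Wt n) (Wt (m + n)) (\<lambda>y. omt m n (wedge_norm (bpt m) (bpt n) (Inr y)))"
    unfolding Wt_def[of n] omt_norm
  proof (rule continuous_map_qtop_desc)
    show "continuous_map (DT n) (Wt (m + n)) (Ep (m + n) \<circ> padR m n)"
      using cont_padR cont_Ep by (rule continuous_map_compose)
  qed (simp add: omt_Inr_Ep)
qed

lemma based_omt: "based_map (wedge (Wt m) (bpt m) (Wt n) (bpt n)) (Inl (bpt m)) (Wt (m + n)) (bpt (m + n)) (omt m n)"
  unfolding based_map_def using cont_omt omt_bpt by blast



definition sv :: "nat \<Rightarrow> (nat \<Rightarrow> real) \<Rightarrow> real" where
  "sv m \<theta> = (if m = 0 then 0 else \<theta> (m - 1))"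

definition tv :: "nat \<Rightarrow> nat \<Rightarrow> (nat \<Rightarrow> real) \<Rightarrow> real" where
  "tv m n \<theta> = (if n = 0 then 1 else \<theta> m)"

definition dd :: "nat \<Rightarrow> nat \<Rightarrow> (nat \<Rightarrow> real) \<Rightarrow> real" where
  "dd m n \<theta> = min (sv m \<theta>) (1 - tv m n \<theta>)"

definition Hh :: "nat \<Rightarrow> nat \<Rightarrow> real \<Rightarrow> (nat \<Rightarrow> real) \<Rightarrow> nat \<Rightarrow> real" where
  "Hh m n \<tau> \<theta> = restrict (\<lambda>i. if i < m then max (\<theta> i - \<tau> * dd m n \<theta>) 0 else min (\<theta> i + \<tau> * dd m n \<theta>) 1) {..<m + n}"

definition alpha' :: "nat \<Rightarrow> nat \<Rightarrow> (nat \<Rightarrow> real) \<Rightarrow> nat \<Rightarrow> real" where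
  "alpha' m n \<theta> = restrict (\<lambda>i. max (\<theta> i - dd m n \<theta>) 0) {..<m}"

definition beta' :: "nat \<Rightarrow> nat \<Rightarrow> (nat \<Rightarrow> real) \<Rightarrow> nat \<Rightarrow> real" where
  "beta' m n \<theta> = restrict (\<lambda>j. min (\<theta> (m + j) + dd m n \<theta>) 1) {..<n}"

definition Rr :: "nat \<Rightarrow> nat \<Rightarrow> (nat \<Rightarrow> real) \<Rightarrow> complex + complex" where
  "Rr m n \<theta> = (if sv m \<theta> \<le> 1 - tv m n \<theta> then wedge_norm (bpt m) (bpt n) (Inr (Ep n (beta' m n \<theta>)))
                else Inl (Ep m (alpha' m n \<theta>)))"

definition rep :: "nat \<Rightarrow> complex \<Rightarrow> nat \<Rightarrow> real" where
  "rep k z = (SOME \<theta>. \<theta> \<in> Dset k \<and> Ep k \<theta> = z)"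

definition rt :: "nat \<Rightarrow> nat \<Rightarrow> complex \<Rightarrow> complex + complex" where
  "rt m n z = Rr m n (rep (m + n) z)"

lemma rep:
  assumes "z \<in> topspace (Wt k)" shows "rep k z \<in> Dset k" "Ep k (rep k z) = z"
proof -
  have "\<exists>\<theta>. \<theta> \<in> Dset k \<and> Ep k \<theta> = z" using assms by auto
  then have "rep k z \<in> Dset k \<and> Ep k (rep k z) = z" unfolding rep_def by (rule someI_ex)
  then show "rep k z \<in> Dset k" "Ep k (rep k z) = z" by auto
qed

context
  fixes m n :: nat and \<theta> :: "nat \<Rightarrow> real"
  assumes t: "\<theta> \<in> Dset (m + n)"
begin

lemma sv_ge0: "0 \<le> sv m \<theta>"
  using Dset_range[OF t, of "m - 1"] by (auto simp: sv_def)

lemma tv_le1: "tv m n \<theta> \<le> 1"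
  using Dset_range[OF t, of m] by (auto simp: tv_def)

lemma sv_le_tv: "sv m \<theta> \<le> tv m n \<theta>"
proof (cases "m = 0")
  case True then show ?thesis using Dset_range[OF t, of m] by (auto simp: sv_def tv_def)
next
  case False
  show ?thesis
  proof (cases "n = 0")
    case True then show ?thesis using Dset_range[OF t, of "m - 1"] False by (auto simp: sv_def tv_def)
  next
    case n: False
    have "\<theta> (m - 1) \<le> \<theta> m" using Dset_mono[OF t, of "m - 1" m] n by auto
    then show ?thesis using False n by (simp add: sv_def tv_def)
  qed
qed

lemma le_sv: "i < m \<Longrightarrow> \<theta> i \<le> sv m \<theta>"
  using Dset_mono[OF t, of i "m - 1"] by (auto simp: sv_def)

lemma tv_le: "m \<le> i \<Longrightarrow> i < m + n \<Longrightarrow> tv m n \<theta> \<le> \<theta> i"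
  using Dset_mono[OF t, of m i] by (auto simp: tv_def)

lemma dd_ge0: "0 \<le> dd m n \<theta>"
  using sv_ge0 tv_le1 by (simp add: dd_def)

lemma rng: "i < m + n \<Longrightarrow> 0 \<le> \<theta> i \<and> \<theta> i \<le> 1"
  using Dset_range[OF t] by blast

lemma rngm: "i < m \<Longrightarrow> 0 \<le> \<theta> i \<and> \<theta> i \<le> 1"
  using rng[of i] by simp

lemma Hh_Dset:
  assumes tau: "0 \<le> \<tau>" "\<tau> \<le> 1"
  shows "Hh m n \<tau> \<theta> \<in> Dset (m + n)"
  unfolding Dset_def
proof (intro CollectI conjI allI impI)
  have e: "0 \<le> \<tau> * dd m n \<theta>" using tau dd_ge0 by simp
  have "\<forall>i<m + n. Hh m n \<tau> \<theta> i \<in> {0..1}"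
  proof (intro allI impI)
    fix i assume i: "i < m + n"
    show "Hh m n \<tau> \<theta> i \<in> {0..1}" using rng[OF i] e i by (auto simp: Hh_def)
  qed
  then show "Hh m n \<tau> \<theta> \<in> {..<m + n} \<rightarrow>\<^sub>E {0..1}"
    by (auto simp: Hh_def PiE_iff)
  fix i j assume ij: "i \<le> j" "j < m + n"
  have tij: "\<theta> i \<le> \<theta> j" using Dset_mono[OF t ij] .
  show "Hh m n \<tau> \<theta> i \<le> Hh m n \<tau> \<theta> j"
  proof (cases "j < m")
    case True then show ?thesis using ij tij by (auto simp: Hh_def)
  next
    case False
    show ?thesis
    proof (cases "i < m")
      case True
      have "max (\<theta> i - \<tau> * dd m n \<theta>) 0 \<le> min (\<theta> j + \<tau> * dd m n \<theta>) 1"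
        using e tij rng[of i] rng[of j] ij by auto
      then show ?thesis using True False ij by (simp add: Hh_def)
    next
      case i: False
      then show ?thesis using False ij tij by (auto simp: Hh_def)
    qed
  qed
qed

lemma alpha'_Dset: "alpha' m n \<theta> \<in> Dset m"
  unfolding Dset_def
proof (intro CollectI conjI allI impI)
  have "\<forall>i<m. alpha' m n \<theta> i \<in> {0..1}"
  proof (intro allI impI)
    fix i assume i: "i < m"
    show "alpha' m n \<theta> i \<in> {0..1}" using rngm[OF i] dd_ge0 i by (auto simp: alpha'_def)
  qed
  then show "alpha' m n \<theta> \<in> {..<m} \<rightarrow>\<^sub>E {0..1}"
    by (auto simp: alpha'_def PiE_iff)
  fix i j assume ij: "i \<le> j" "j < m"
  then have "\<theta> i \<le> \<theta> j" using Dset_mono[OF t, of i j] by auto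
  then show "alpha' m n \<theta> i \<le> alpha' m n \<theta> j" using ij by (auto simp: alpha'_def)
qed

lemma beta'_Dset: "beta' m n \<theta> \<in> Dset n"
  unfolding Dset_def
proof (intro CollectI conjI allI impI)
  have "\<forall>i<n. beta' m n \<theta> i \<in> {0..1}"
  proof (intro allI impI)
    fix i assume i: "i < n"
    then have "m + i < m + n" by simp
    show "beta' m n \<theta> i \<in> {0..1}" using rng[OF \<open>m + i < m + n\<close>] dd_ge0 i by (auto simp: beta'_def)
  qed
  then show "beta' m n \<theta> \<in> {..<n} \<rightarrow>\<^sub>E {0..1}"
    by (auto simp: beta'_def PiE_iff)
  fix i j assume ij: "i \<le> j" "j < n"
  then have "\<theta> (m + i) \<le> \<theta> (m + j)" using Dset_mono[OF t, of "m + i" "m + j"] by auto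
  then show "beta' m n \<theta> i \<le> beta' m n \<theta> j" using ij by (auto simp: beta'_def)
qed

lemma vertex_dd:
  assumes v: "\<forall>i<m + n. \<theta> i \<in> {0,1}"
  shows "dd m n \<theta> = 0"
proof -
  have s: "sv m \<theta> = 0 \<or> sv m \<theta> = 1"
    using v by (cases "m = 0") (auto simp: sv_def)
  have tt: "tv m n \<theta> = 0 \<or> tv m n \<theta> = 1"
    using v by (cases "n = 0") (auto simp: tv_def)
  show ?thesis using s tt sv_le_tv by (auto simp: dd_def)
qed

lemma dd0_Hh:
  assumes "dd m n \<theta> = 0"
  shows "Ep (m + n) (Hh m n \<tau> \<theta>) = Ep (m + n) \<theta>"
proof (rule Ep_cong)
  fix i assume "i < m + n"
  then show "Hh m n \<tau> \<theta> i = \<theta> i" using rng[of i] assms by (auto simp: Hh_def)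
qed

lemma vertex_Rr:
  assumes v: "\<forall>i<m + n. \<theta> i \<in> {0,1}"
  shows "Rr m n \<theta> = Inl (bpt m)"
proof -
  have d: "dd m n \<theta> = 0" using vertex_dd[OF v] .
  have a: "Ep m (alpha' m n \<theta>) = bpt m"
  proof (rule Ep_vertex)
    fix i assume i: "i < m"
    then have "\<theta> i \<in> {0,1}" using v by auto
    then show "alpha' m n \<theta> i \<in> {0,1}" using i d by (auto simp: alpha'_def)
  qed
  have b: "Ep n (beta' m n \<theta>) = bpt n"
  proof (rule Ep_vertex)
    fix i assume i: "i < n"
    then have "\<theta> (m + i) \<in> {0,1}" using v by auto
    then show "beta' m n \<theta> i \<in> {0,1}" using i d by (auto simp: beta'_def)
  qed
  show ?thesis using a b by (simp add: Rr_def wedge_norm_Inr)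
qed

end



lemma cont_sv: "continuous_map (DT (m + n)) euclideanreal (sv m)"
proof (cases "m = 0")
  case True
  have "continuous_map (DT (m + n)) euclideanreal (\<lambda>_. 0)" by simp
  then show ?thesis by (rule continuous_map_eq) (simp add: sv_def True)
next
  case False
  then have "m - 1 < m + n" by simp
  then show ?thesis by (rule continuous_map_eq[OF cont_proj_DT]) (simp add: sv_def False)
qed

lemma cont_tv: "continuous_map (DT (m + n)) euclideanreal (tv m n)"
proof (cases "n = 0")
  case True
  have "continuous_map (DT (m + n)) euclideanreal (\<lambda>_. 1)" by simp
  then show ?thesis by (rule continuous_map_eq) (simp add: tv_def True)
next
  case False
  then have "m < m + n" by simp
  then show ?thesis by (rule continuous_map_eq[OF cont_proj_DT]) (simp add: tv_def False)
qed

lemma cont_dd: "continuous_map (DT (m + n)) euclideanreal (dd m n)"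
proof -
  have "continuous_map (DT (m + n)) euclideanreal (\<lambda>\<theta>. min (sv m \<theta>) (1 - tv m n \<theta>))"
    using cont_sv cont_tv by (intro continuous_intros) auto
  then show ?thesis by (simp add: dd_def[abs_def])
qed

lemma cont_alpha': "continuous_map (DT (m + n)) (DT m) (alpha' m n)"
proof (rule cont_into_DT)
  fix \<theta> assume "\<theta> \<in> topspace (DT (m + n))"
  then show "alpha' m n \<theta> \<in> Dset m" using alpha'_Dset by simp
next
  fix i assume i: "i < m"
  then have i': "i < m + n" by simp
  have "continuous_map (DT (m + n)) euclideanreal (\<lambda>\<theta>. max (\<theta> i - dd m n \<theta>) 0)"
    using cont_proj_DT[OF i'] cont_dd by (intro continuous_intros) auto
  then show "continuous_map (DT (m + n)) euclideanreal (\<lambda>\<theta>. alpha' m n \<theta> i)"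
    by (rule continuous_map_eq) (simp add: alpha'_def i)
qed

lemma cont_beta': "continuous_map (DT (m + n)) (DT n) (beta' m n)"
proof (rule cont_into_DT)
  fix \<theta> assume "\<theta> \<in> topspace (DT (m + n))"
  then show "beta' m n \<theta> \<in> Dset n" using beta'_Dset by simp
next
  fix i assume i: "i < n"
  then have i': "m + i < m + n" by simp
  have "continuous_map (DT (m + n)) euclideanreal (\<lambda>\<theta>. min (\<theta> (m + i) + dd m n \<theta>) 1)"
    using cont_proj_DT[OF i'] cont_dd by (intro continuous_intros) auto
  then show "continuous_map (DT (m + n)) euclideanreal (\<lambda>\<theta>. beta' m n \<theta> i)"
    by (rule continuous_map_eq) (simp add: beta'_def i)
qed

lemma cont_Rr: "continuous_map (DT (m + n)) (wedge (Wt m) (bpt m) (Wt n) (bpt n)) (Rr m n)"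
proof -
  let ?W = "wedge (Wt m) (bpt m) (Wt n) (bpt n)"
  let ?f = "\<lambda>\<theta>. wedge_norm (bpt m) (bpt n) (Inr (Ep n (beta' m n \<theta>)))"
  let ?g = "\<lambda>\<theta>. Inl (Ep m (alpha' m n \<theta>)) :: complex + complex"
  have cf: "continuous_map (DT (m + n)) ?W ?f"
    using continuous_map_compose[OF continuous_map_compose[OF cont_beta' cont_Ep] continuous_map_wedge_Inr[OF bpt_in]]
    by (simp add: o_def)
  have cg: "continuous_map (DT (m + n)) ?W ?g"
    using continuous_map_compose[OF continuous_map_compose[OF cont_alpha' cont_Ep] continuous_map_wedge_Inl[OF bpt_in]]
    by (simp add: o_def)
  have "continuous_map (DT (m + n)) ?W (\<lambda>\<theta>. if sv m \<theta> \<le> 1 - tv m n \<theta> then ?f \<theta> else ?g \<theta>)"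
  proof (rule continuous_map_cases_le)
    show "continuous_map (DT (m + n)) euclideanreal (sv m)" by (rule cont_sv)
    show "continuous_map (DT (m + n)) euclideanreal (\<lambda>\<theta>. 1 - tv m n \<theta>)"
      using cont_tv by (intro continuous_intros) auto
    show "continuous_map (subtopology (DT (m + n)) {x \<in> topspace (DT (m + n)). sv m x \<le> 1 - tv m n x}) ?W ?f"
      using cf by (rule continuous_map_from_subtopology)
    show "continuous_map (subtopology (DT (m + n)) {x \<in> topspace (DT (m + n)). 1 - tv m n x \<le> sv m x}) ?W ?g"
      using cg by (rule continuous_map_from_subtopology)
  next
    fix \<theta> assume t: "\<theta> \<in> topspace (DT (m + n))" and e: "sv m \<theta> = 1 - tv m n \<theta>"
    then have t: "\<theta> \<in> Dset (m + n)" by simp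
    have d: "dd m n \<theta> = sv m \<theta>" using e by (simp add: dd_def)
    have a: "Ep m (alpha' m n \<theta>) = bpt m"
    proof (rule Ep_vertex)
      fix i assume i: "i < m"
      have "\<theta> i \<le> sv m \<theta>" using le_sv[OF t i] .
      then show "alpha' m n \<theta> i \<in> {0,1}" using i d by (simp add: alpha'_def)
    qed
    have b: "Ep n (beta' m n \<theta>) = bpt n"
    proof (rule Ep_vertex)
      fix i assume i: "i < n"
      have "tv m n \<theta> \<le> \<theta> (m + i)" using tv_le[OF t, of "m + i"] i by simp
      then show "beta' m n \<theta> i \<in> {0,1}" using i d e by (simp add: beta'_def)
    qed
    show "?f \<theta> = ?g \<theta>" using a b by (simp add: wedge_norm_Inr)
  qed
  then show ?thesis by (simp add: Rr_def[abs_def])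
qed

lemma Rr_fiber:
  assumes t: "\<theta> \<in> Dset (m + n)" and t': "\<theta>' \<in> Dset (m + n)" and e: "Ep (m + n) \<theta> = Ep (m + n) \<theta>'"
  shows "Rr m n \<theta> = Rr m n \<theta>'"
proof -
  have "\<theta> = \<theta>' \<or> (\<forall>i<m + n. \<theta> i \<in> {0,1} \<and> \<theta>' i \<in> {0,1})" using Ep_fiber[OF t t' e] .
  then show ?thesis
  proof
    assume "\<forall>i<m + n. \<theta> i \<in> {0,1} \<and> \<theta>' i \<in> {0,1}"
    then have "\<forall>i<m + n. \<theta> i \<in> {0,1}" "\<forall>i<m + n. \<theta>' i \<in> {0,1}" by auto
    then show ?thesis using vertex_Rr[OF t] vertex_Rr[OF t'] by simp
  qed simp
qed

lemma rt_Ep: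
  assumes t: "\<theta> \<in> Dset (m + n)" shows "rt m n (Ep (m + n) \<theta>) = Rr m n \<theta>"
proof -
  have z: "Ep (m + n) \<theta> \<in> topspace (Wt (m + n))" using t by simp
  show ?thesis unfolding rt_def by (rule Rr_fiber[OF rep(1)[OF z] t rep(2)[OF z]])
qed

lemma cont_rt: "continuous_map (Wt (m + n)) (wedge (Wt m) (bpt m) (Wt n) (bpt n)) (rt m n)"
  unfolding Wt_def[of "m + n"]
  by (rule continuous_map_qtop_desc[OF cont_Rr]) (simp add: rt_Ep)

lemma rt_bpt: "rt m n (bpt (m + n)) = Inl (bpt m)"
proof -
  let ?z = "\<lambda>i\<in>{..<m + n}. 0::real"
  have "bpt (m + n) = Ep (m + n) ?z" unfolding bpt_def by (rule Ep_cong) simp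
  moreover have "Rr m n ?z = Inl (bpt m)" using vertex_Rr[OF Dset_zero] by simp
  ultimately show ?thesis using rt_Ep[OF Dset_zero] by simp
qed

lemma based_rt: "based_map (Wt (m + n)) (bpt (m + n)) (wedge (Wt m) (bpt m) (Wt n) (bpt n)) (Inl (bpt m)) (rt m n)"
  unfolding based_map_def using cont_rt rt_bpt by blast



lemma rt_omt:
  assumes z: "z \<in> topspace (wedge (Wt m) (bpt m) (Wt n) (bpt n))"
  shows "rt m n (omt m n z) = z"
proof -
  have zc: "z \<in> wedge_carrier (Wt m) (bpt m) (Wt n) (bpt n)"
    using z topspace_wedge[OF bpt_in, of m "Wt n" "bpt n"] by simp
  show ?thesis
  proof (cases z)
    case (Inl x)
    then have "x \<in> topspace (Wt m)" using zc by (auto simp: wedge_carrier_def)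
    then obtain \<alpha> where a: "\<alpha> \<in> Dset m" and x: "x = Ep m \<alpha>" by auto
    let ?\<theta> = "padL m n \<alpha>"
    have t: "?\<theta> \<in> Dset (m + n)" using padL_Dset[OF a] .
    have tv: "tv m n ?\<theta> = 1" by (simp add: tv_def padL_def)
    have d: "dd m n ?\<theta> = 0" using sv_ge0[OF t] tv by (simp add: dd_def)
    have ai: "\<And>i. i < m \<Longrightarrow> ?\<theta> i = \<alpha> i" by (simp add: padL_def)
    have ea: "Ep m (alpha' m n ?\<theta>) = x"
      unfolding x
    proof (rule Ep_cong)
      fix i assume i: "i < m"
      show "alpha' m n ?\<theta> i = \<alpha> i" using i d ai[OF i] Dset_range[OF a i] by (simp add: alpha'_def)
    qed
    have eb: "Ep n (beta' m n ?\<theta>) = bpt n"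
    proof (rule Ep_vertex)
      fix i assume i: "i < n"
      show "beta' m n ?\<theta> i \<in> {0,1}" using i d by (simp add: beta'_def padL_def)
    qed
    have "Rr m n ?\<theta> = Inl x"
    proof (cases "sv m ?\<theta> \<le> 1 - tv m n ?\<theta>")
      case True
      then have s0: "sv m ?\<theta> = 0" using tv sv_ge0[OF t] by simp
      have "x = bpt m"
        unfolding x
      proof (rule Ep_vertex)
        fix i assume i: "i < m"
        have "?\<theta> i \<le> sv m ?\<theta>" using le_sv[OF t i] .
        then have "\<alpha> i = 0" using s0 ai[OF i] Dset_range[OF a i] by simp
        then show "\<alpha> i \<in> {0,1}" by simp
      qed
      then show ?thesis using True eb by (simp add: Rr_def wedge_norm_Inr)
    next
      case False
      then show ?thesis using ea by (simp add: Rr_def)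
    qed
    then show ?thesis using Inl x rt_Ep[OF t] omt_Inl_Ep by simp
  next
    case (Inr y)
    then have "y \<in> topspace (Wt n)" "y \<noteq> bpt n" using zc by (auto simp: wedge_carrier_def)
    then obtain \<beta> where b: "\<beta> \<in> Dset n" and y: "y = Ep n \<beta>" and yb: "y \<noteq> bpt n" by auto
    let ?\<theta> = "padR m n \<beta>"
    have t: "?\<theta> \<in> Dset (m + n)" using padR_Dset[OF b] .
    have sv: "sv m ?\<theta> = 0" by (cases "m = 0") (simp_all add: sv_def padR_def)
    have d: "dd m n ?\<theta> = 0" using sv tv_le1[OF t] by (simp add: dd_def)
    have eb: "Ep n (beta' m n ?\<theta>) = y"
      unfolding y
    proof (rule Ep_cong)
      fix i assume i: "i < n"
      show "beta' m n ?\<theta> i = \<beta> i" using i d Dset_range[OF b i] by (simp add: beta'_def padR_def)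
    qed
    have "Rr m n ?\<theta> = Inr y"
      using sv tv_le1[OF t] eb yb by (simp add: Rr_def wedge_norm_Inr)
    then show ?thesis using Inr y rt_Ep[OF t] omt_Inr_Ep by simp
  qed
qed

lemma Hh_fiber:
  assumes t: "\<theta> \<in> Dset (m + n)" and t': "\<theta>' \<in> Dset (m + n)" and e: "Ep (m + n) \<theta> = Ep (m + n) \<theta>'"
  shows "Ep (m + n) (Hh m n \<tau> \<theta>) = Ep (m + n) (Hh m n \<tau> \<theta>')"
proof -
  have "\<theta> = \<theta>' \<or> (\<forall>i<m + n. \<theta> i \<in> {0,1} \<and> \<theta>' i \<in> {0,1})" using Ep_fiber[OF t t' e] .
  then show ?thesis
  proof
    assume "\<forall>i<m + n. \<theta> i \<in> {0,1} \<and> \<theta>' i \<in> {0,1}"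
    then have "\<forall>i<m + n. \<theta> i \<in> {0,1}" "\<forall>i<m + n. \<theta>' i \<in> {0,1}" by auto
    then have "dd m n \<theta> = 0" "dd m n \<theta>' = 0" using vertex_dd[OF t] vertex_dd[OF t'] by auto
    then show ?thesis using dd0_Hh[OF t] dd0_Hh[OF t'] e by simp
  qed simp
qed

lemma Hh0:
  assumes t: "\<theta> \<in> Dset (m + n)" shows "Ep (m + n) (Hh m n 0 \<theta>) = Ep (m + n) \<theta>"
proof (rule Ep_cong)
  fix i assume "i < m + n"
  then show "Hh m n 0 \<theta> i = \<theta> i" using rng[OF t, of i] by (auto simp: Hh_def)
qed

lemma Hh1:
  assumes t: "\<theta> \<in> Dset (m + n)" shows "Ep (m + n) (Hh m n 1 \<theta>) = omt m n (Rr m n \<theta>)"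
proof (cases "sv m \<theta> \<le> 1 - tv m n \<theta>")
  case True
  then have d: "dd m n \<theta> = sv m \<theta>" by (simp add: dd_def)
  have "Ep (m + n) (Hh m n 1 \<theta>) = Ep (m + n) (padR m n (beta' m n \<theta>))"
  proof (rule Ep_cong)
    fix i assume i: "i < m + n"
    show "Hh m n 1 \<theta> i = padR m n (beta' m n \<theta>) i"
    proof (cases "i < m")
      case True
      then have "\<theta> i \<le> sv m \<theta>" "0 \<le> \<theta> i" using le_sv[OF t] rng[OF t i] by auto
      then show ?thesis using True i d by (simp add: Hh_def padR_def)
    next
      case False
      then have im: "i - m < n" "m + (i - m) = i" using i by auto
      have "padR m n (beta' m n \<theta>) i = beta' m n \<theta> (i - m)" using False i by (simp add: padR_def)
      also have "\<dots> = min (\<theta> i + dd m n \<theta>) 1" using im by (simp add: beta'_def)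
      finally show ?thesis using False i by (simp add: Hh_def)
    qed
  qed
  then show ?thesis using True by (simp add: Rr_def omt_norm omt_Inr_Ep)
next
  case False
  then have d: "dd m n \<theta> = 1 - tv m n \<theta>" by (simp add: dd_def)
  have "Ep (m + n) (Hh m n 1 \<theta>) = Ep (m + n) (padL m n (alpha' m n \<theta>))"
  proof (rule Ep_cong)
    fix i assume i: "i < m + n"
    show "Hh m n 1 \<theta> i = padL m n (alpha' m n \<theta>) i"
    proof (cases "i < m")
      case True
      then show ?thesis using i by (simp add: Hh_def padL_def alpha'_def)
    next
      case False
      then have "tv m n \<theta> \<le> \<theta> i" using tv_le[OF t _ i] by simp
      then show ?thesis using False i d by (simp add: Hh_def padL_def)
    qed
  qed
  then show ?thesis using False by (simp add: Rr_def omt_Inl_Ep)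
qed



definition Hc :: "nat \<Rightarrow> nat \<Rightarrow> real \<times> (nat \<Rightarrow> real) \<Rightarrow> nat \<Rightarrow> real" where
  "Hc m n p = Hh m n (1 - fst p) (snd p)"

lemma cfst: "continuous_map (prod_topology (top_of_set {0..1}) X) euclideanreal fst"
proof -
  have "continuous_map (top_of_set {0..1::real}) euclideanreal id"
    by (rule continuous_map_from_subtopology) (rule continuous_map_id)
  then have "continuous_map (prod_topology (top_of_set {0..1}) X) euclideanreal (id \<circ> fst)"
    by (rule continuous_map_compose[OF continuous_map_fst])
  then show ?thesis by simp
qed

lemma cont_Hc: "continuous_map (prod_topology (top_of_set {0..1}) (DT (m + n))) (DT (m + n)) (Hc m n)"
proof (rule cont_into_DT)
  fix p assume "p \<in> topspace (prod_topology (top_of_set {0..1::real}) (DT (m + n)))"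
  then have "fst p \<in> {0..1}" "snd p \<in> Dset (m + n)" by auto
  then show "Hc m n p \<in> Dset (m + n)" unfolding Hc_def by (intro Hh_Dset) auto
next
  fix i assume i: "i < m + n"
  let ?X = "prod_topology (top_of_set {0..1::real}) (DT (m + n))"
  have c1: "continuous_map ?X euclideanreal (\<lambda>p. snd p i)"
    using continuous_map_compose[OF continuous_map_snd cont_proj_DT[OF i]] by (simp add: o_def)
  have c2: "continuous_map ?X euclideanreal (\<lambda>p. dd m n (snd p))"
    using continuous_map_compose[OF continuous_map_snd cont_dd] by (simp add: o_def)
  have c3: "continuous_map ?X euclideanreal fst" by (rule cfst)
  show "continuous_map ?X euclideanreal (\<lambda>p. Hc m n p i)"
  proof (cases "i < m")
    case True
    have "continuous_map ?X euclideanreal (\<lambda>p. max (snd p i - (1 - fst p) * dd m n (snd p)) 0)"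
      using c1 c2 c3 by (intro continuous_intros) auto
    then show ?thesis by (rule continuous_map_eq) (simp add: Hc_def Hh_def i True)
  next
    case False
    have "continuous_map ?X euclideanreal (\<lambda>p. min (snd p i + (1 - fst p) * dd m n (snd p)) 1)"
      using c1 c2 c3 by (intro continuous_intros) auto
    then show ?thesis by (rule continuous_map_eq) (simp add: Hc_def Hh_def i False)
  qed
qed

definition Qm :: "nat \<Rightarrow> real \<times> (nat \<Rightarrow> real) \<Rightarrow> real \<times> complex" where
  "Qm k p = (fst p, Ep k (snd p))"

lemma quotient_Qm: "quotient_map (prod_topology (top_of_set {0..1}) (DT k)) (prod_topology (top_of_set {0..1}) (Wt k)) (Qm k)"
proof (rule continuous_imp_quotient_map)
  show "continuous_map (prod_topology (top_of_set {0..1}) (DT k)) (prod_topology (top_of_set {0..1}) (Wt k)) (Qm k)"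
    unfolding Qm_def
    using continuous_map_compose[OF continuous_map_snd cont_Ep]
    by (intro continuous_map_pairedI continuous_map_fst) (simp add: o_def)
  have c01: "compact_space (top_of_set {0..1::real})"
    by (rule compact_space_subtopology) simp
  show "compact_space (prod_topology (top_of_set {0..1::real}) (DT k))"
    using c01 compact_DT[of k] by (simp add: compact_space_prod_topology)
  have h01: "Hausdorff_space (top_of_set {0..1::real})"
    by (simp add: Hausdorff_space_subtopology)
  show "Hausdorff_space (prod_topology (top_of_set {0..1::real}) (Wt k))"
    by (rule Hausdorff_space_prod_topology[THEN iffD2], rule disjI2, rule conjI[OF h01 Hausdorff_Wt])
  show "Qm k ` topspace (prod_topology (top_of_set {0..1}) (DT k)) = topspace (prod_topology (top_of_set {0..1}) (Wt k))"
    by (auto simp: Qm_def image_iff)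
qed

definition Gh :: "nat \<Rightarrow> nat \<Rightarrow> real \<times> complex \<Rightarrow> complex" where
  "Gh m n p = Ep (m + n) (Hc m n (fst p, rep (m + n) (snd p)))"

lemma cont_Gh: "continuous_map (prod_topology (top_of_set {0..1}) (Wt (m + n))) (Wt (m + n)) (Gh m n)"
proof (rule continuous_compose_quotient_map[OF quotient_Qm])
  have c: "continuous_map (prod_topology (top_of_set {0..1}) (DT (m + n))) (Wt (m + n)) (Ep (m + n) \<circ> Hc m n)"
    using cont_Hc cont_Ep by (rule continuous_map_compose)
  show "continuous_map (prod_topology (top_of_set {0..1}) (DT (m + n))) (Wt (m + n)) (Gh m n \<circ> Qm (m + n))"
  proof (rule continuous_map_eq[OF c])
    fix p assume "p \<in> topspace (prod_topology (top_of_set {0..1::real}) (DT (m + n)))"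
    then have t: "snd p \<in> Dset (m + n)" by auto
    then have z: "Ep (m + n) (snd p) \<in> topspace (Wt (m + n))" by simp
    have "Ep (m + n) (Hh m n (1 - fst p) (snd p)) = Ep (m + n) (Hh m n (1 - fst p) (rep (m + n) (Ep (m + n) (snd p))))"
      using Hh_fiber[OF t rep(1)[OF z] rep(2)[OF z, symmetric]] .
    then show "(Ep (m + n) \<circ> Hc m n) p = (Gh m n \<circ> Qm (m + n)) p"
      by (simp add: Gh_def Qm_def Hc_def)
  qed
qed

lemma Gh_1: "z \<in> topspace (Wt (m + n)) \<Longrightarrow> Gh m n (1, z) = z"
  using Hh0[OF rep(1)] rep(2) by (simp add: Gh_def Hc_def)

lemma Gh_0: "z \<in> topspace (Wt (m + n)) \<Longrightarrow> Gh m n (0, z) = omt m n (rt m n z)"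
  using Hh1[OF rep(1)] by (simp add: Gh_def Hc_def rt_def)

lemma Gh_bpt: "Gh m n (t, bpt (m + n)) = bpt (m + n)"
proof -
  let ?z = "\<lambda>i\<in>{..<m + n}. 0::real"
  have z: "bpt (m + n) \<in> topspace (Wt (m + n))" by (rule bpt_in)
  have e: "bpt (m + n) = Ep (m + n) ?z" unfolding bpt_def by (rule Ep_cong) simp
  have r: "rep (m + n) (bpt (m + n)) \<in> Dset (m + n)" "Ep (m + n) (rep (m + n) (bpt (m + n))) = Ep (m + n) ?z"
    using rep[OF z] e by auto
  have "Ep (m + n) (Hh m n (1 - t) (rep (m + n) (bpt (m + n)))) = Ep (m + n) (Hh m n (1 - t) ?z)"
    using Hh_fiber[OF r(1) Dset_zero r(2)] .
  also have "\<dots> = Ep (m + n) ?z"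
    using dd0_Hh[OF Dset_zero] vertex_dd[OF Dset_zero] by simp
  finally show ?thesis using e by (simp add: Gh_def Hc_def)
qed

lemma omt_equiv:
  "based_homotopy_equivalence (wedge (Wt m) (bpt m) (Wt n) (bpt n)) (Inl (bpt m)) (Wt (m + n)) (bpt (m + n)) (omt m n)"
  unfolding based_homotopy_equivalence_def
proof (intro conjI exI)
  show "based_map (wedge (Wt m) (bpt m) (Wt n) (bpt n)) (Inl (bpt m)) (Wt (m + n)) (bpt (m + n)) (omt m n)"
    by (rule based_omt)
  show "based_map (Wt (m + n)) (bpt (m + n)) (wedge (Wt m) (bpt m) (Wt n) (bpt n)) (Inl (bpt m)) (rt m n)"
    by (rule based_rt)
  show "based_homotopic (wedge (Wt m) (bpt m) (Wt n) (bpt n)) (Inl (bpt m)) (wedge (Wt m) (bpt m) (Wt n) (bpt n)) (Inl (bpt m))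
          (rt m n \<circ> omt m n) id"
    unfolding based_homotopic_def
  proof (rule homotopic_with_equal)
    show "(rt m n \<circ> omt m n) (Inl (bpt m)) = Inl (bpt m)" by (simp add: omt_bpt rt_bpt)
    show "id (Inl (bpt m)) = Inl (bpt m)" by simp
    show "continuous_map (wedge (Wt m) (bpt m) (Wt n) (bpt n)) (wedge (Wt m) (bpt m) (Wt n) (bpt n)) (rt m n \<circ> omt m n)"
      using cont_omt cont_rt by (rule continuous_map_compose)
    fix x assume "x \<in> topspace (wedge (Wt m) (bpt m) (Wt n) (bpt n))"
    then show "(rt m n \<circ> omt m n) x = id x" by (simp add: rt_omt)
  qed
  show "based_homotopic (Wt (m + n)) (bpt (m + n)) (Wt (m + n)) (bpt (m + n)) (omt m n \<circ> rt m n) id"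
  proof -
    define h where "h = (\<lambda>p. if fst p = 0 then omt m n (rt m n (snd p)) else if fst p = 1 then snd p else Gh m n p)"
    have c: "continuous_map (prod_topology (top_of_set {0..1}) (Wt (m + n))) (Wt (m + n)) h"
    proof (rule continuous_map_eq[OF cont_Gh])
      fix p assume "p \<in> topspace (prod_topology (top_of_set {0..1::real}) (Wt (m + n)))"
      then have z: "snd p \<in> topspace (Wt (m + n))" by auto
      obtain t z' where p: "p = (t, z')" by (cases p)
      show "Gh m n p = h p" using Gh_0[OF z] Gh_1[OF z] p by (auto simp: h_def)
    qed
    have h0: "\<forall>x. h (0, x) = (omt m n \<circ> rt m n) x" by (simp add: h_def)
    have h1: "\<forall>x. h (1, x) = id x" by (simp add: h_def)
    have hb: "\<forall>t\<in>{0..1}. (\<lambda>x. h (t, x)) (bpt (m + n)) = bpt (m + n)"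
      using Gh_bpt[of m n] by (simp add: h_def rt_bpt omt_bpt)
    show ?thesis
      unfolding based_homotopic_def homotopic_with_def
      by (rule exI[of _ h]) (intro conjI c h0 h1 hb)
  qed
qed

lemma bpt_in': "bpt k \<in> Ep k ` Dset k"
  using bpt_in by simp

lemma topspace_one_point: "topspace one_point = {()}"
  by (simp add: one_point_def)

lemma point_equiv: "based_homotopy_equivalence one_point () (Wt 0) (bpt 0) (\<lambda>_. bpt 0)"
  unfolding based_homotopy_equivalence_def
proof (intro conjI exI)
  show "based_map one_point () (Wt 0) (bpt 0) (\<lambda>_. bpt 0)"
    unfolding based_map_def continuous_map_const using bpt_in[of 0] by blast
  show "based_map (Wt 0) (bpt 0) one_point () (\<lambda>_. ())"
    unfolding based_map_def by (simp add: topspace_one_point bpt_in')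
  show "based_homotopic one_point () one_point () ((\<lambda>_. ()) \<circ> (\<lambda>_. bpt 0)) id"
    unfolding based_homotopic_def
    by (rule homotopic_with_equal) (auto simp: topspace_one_point)
  show "based_homotopic (Wt 0) (bpt 0) (Wt 0) (bpt 0) ((\<lambda>_. bpt 0) \<circ> (\<lambda>_. ())) id"
    unfolding based_homotopic_def
  proof (rule homotopic_with_equal)
    show "continuous_map (Wt 0) (Wt 0) ((\<lambda>_. bpt 0) \<circ> (\<lambda>_. ()))" by (simp add: o_def bpt_in')
    fix x assume "x \<in> topspace (Wt 0)"
    then obtain \<theta> where "x = Ep 0 \<theta>" by auto
    then have "x = bpt 0" using Ep_vertex[of 0 \<theta>] by simp
    then show "((\<lambda>_. bpt 0) \<circ> (\<lambda>_. ())) x = id x" by simp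
  qed auto
qed

theorem lemma3p2p2:
  shows "\<exists>(W :: nat \<Rightarrow> complex topology) bp Wm om.
           homotopy_monoid_Topop W bp Wm om \<and>
           W 1 = top_of_set (sphere 0 1) \<and> bp 1 = 1"
proof (intro exI conjI)
  show "Wt 1 = top_of_set (sphere 0 1)" by (rule Wt_1)
  show "bpt 1 = 1" by (rule bpt_1)
  show "homotopy_monoid_Topop Wt bpt Wmt omt"
    unfolding homotopy_monoid_Topop_def
  proof (intro conjI allI impI ballI)
    show "\<And>n. cgh_based (Wt n) (bpt n)" by (rule cgh_Wt)
    show "\<And>m n f. f \<in> Delta_hom m n \<Longrightarrow> based_map (Wt n) (bpt n) (Wt m) (bpt m) (Wmt m n f)"
      by (rule based_Wmt)
    show "\<And>n x. x \<in> topspace (Wt n) \<Longrightarrow> Wmt n n (Delta_id n) x = x" by (rule Wmt_id)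
    show "\<And>l m n f g x. f \<in> Delta_hom l m \<Longrightarrow> g \<in> Delta_hom m n \<Longrightarrow> x \<in> topspace (Wt n) \<Longrightarrow>
           Wmt l n (Delta_comp l g f) x = Wmt l m f (Wmt m n g x)"
      by (rule Wmt_comp)
    show "\<And>m n. based_map (wedge (Wt m) (bpt m) (Wt n) (bpt n)) (Inl (bpt m)) (Wt (m + n)) (bpt (m + n)) (omt m n)"
      by (rule based_omt)
    show "\<And>m m' n n' f g z. f \<in> Delta_hom m m' \<Longrightarrow> g \<in> Delta_hom n n' \<Longrightarrow>
           z \<in> topspace (wedge (Wt m') (bpt m') (Wt n') (bpt n')) \<Longrightarrow>
           Wmt (m + n) (m' + n') (Delta_sum m n m' f g) (omt m' n' z) =
           omt m n (wedge_map (bpt m) (bpt n) (Wmt m m' f) (Wmt n n' g) z)"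
      by (rule omt_natural)
    show "\<And>l m n z. z \<in> topspace (wedge (wedge (Wt l) (bpt l) (Wt m) (bpt m)) (Inl (bpt l)) (Wt n) (bpt n)) \<Longrightarrow>
           omt (l + m) n (wedge_map (bpt (l + m)) (bpt n) (omt l m) id z) =
           omt l (m + n) (wedge_map (bpt l) (bpt (m + n)) id (omt m n) (wedge_assoc z))"
      by (rule omt_coassoc)
    show "\<And>n x. x \<in> topspace (Wt n) \<Longrightarrow> omt 0 n (wedge_norm (bpt 0) (bpt n) (Inr x)) = x"
      by (rule counit_left)
    show "\<And>n x. x \<in> topspace (Wt n) \<Longrightarrow> omt n 0 (Inl x) = x"
      by (rule counit_right)
    show "based_homotopy_equivalence one_point () (Wt 0) (bpt 0) (\<lambda>_. bpt 0)"
      by (rule point_equiv)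
    show "\<And>m n. based_homotopy_equivalence (wedge (Wt m) (bpt m) (Wt n) (bpt n)) (Inl (bpt m))
              (Wt (m + n)) (bpt (m + n)) (omt m n)"
      by (rule omt_equiv)
  qed
qed


end
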